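(* Assume that the policies $\mathcal S$ (always activate) and $\emptyset$ (never activate) are unichain in $\mathcal M$. Then: (1) if $\lambda\le-\|r^1-r^0\|_\infty-\tfrac12\,\mathrm{sp}(r^1)\,D(P^1)\,\|P^1-P^0\|_\infty$, then $\mathcal S$ is BO in $\mathcal M(\lambda)$; (2) if $\lambda\ge\|r^1-r^0\|_\infty+\tfrac12\,\mathrm{sp}(r^0)\,D(P^0)\,\|P^1-P^0\|_\infty$, then $\emptyset$ is BO in $\mathcal M(\lambda)$.
   Context: Setting. An MDP is $\mathcal M=(\mathcal S,\{0,1\},(P^a)_a,(r^a)_a)$, finite $\mathcal S$, row-stochastic $P^0,P^1$, rewards $r^0,r^1\in\mathbb R^{\mathcal S}$. A policy is a subset $\pi\subseteq\mathcal S$ of states where action 1 is played, inducing $P^\pi$, $r^\pi$. For $\lambda\in\mathbb R$, $\mathcal M(\lambda)$ has the same transitions and rewards $r^1-\lambda\mathbf 1$ (action 1), $r^0$ (action 0). For a unichain policy, gain and bias $b^\pi(\lambda)$ solve $g^\pi\mathbf 1+b^\pi=r^\pi+P^\pi b^\pi$; the activation advantage is $\alpha^\pi_s(\lambda)=r^1_s-\lambda-r^0_s+(P^1_{s,\cdot}-P^0_{s,\cdot})\cdot b^\pi(\lambda)$. A policy is BO (bias optimal) in $\mathcal M(\lambda)$ if it is gain optimal and bias-maximal among gain-optimal policies; for unichain MDPs, $\pi$ is BO iff $\alpha^\pi_s(\lambda)\ge0$ for $s\in\pi$ and $\le0$ for $s\notin\pi$. $\mathrm{sp}(v)=\max_s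 v_s-\min_s v_s$; for vectors $\|v\|_\infty=\max_s|v_s|$; for matrices $\|A\|_\infty=\max_s\sum_{s'}|A_{s,s'}|$. The diameter of a unichain stochastic matrix $P$ with recurrent class $\mathcal S_r$ is $D(P)=\max_{s\in\mathcal S,s'\in\mathcal S_r}\mathbb E^P[\tau_{s,s'}]$, where $\tau_{s,s'}$ is the number of steps to reach $s'$ from $s$. *)

theory Defs
  imports "HOL-Analysis.Analysis"
begin

definition stochastic :: "('s::finite \<Rightarrow> 's \<Rightarrow> real) \<Rightarrow> bool" where
  "stochastic P \<longleftrightarrow> (\<forall>s s'. 0 \<le> P s s') \<and> (\<forall>s. (\<Sum>s'\<in>UNIV. P s s') = 1)"

fun nstep :: "('s::finite \<Rightarrow> 's \<Rightarrow> real) \<Rightarrow> nat \<Rightarrow> 's \<Rightarrow> 's \<Rightarrow> real" where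
  "nstep P 0 s s' = (if s = s' then 1 else 0)"
| "nstep P (Suc n) s s' = (\<Sum>u\<in>UNIV. nstep P n s u * P u s')"

definition reach :: "('s::finite \<Rightarrow> 's \<Rightarrow> real) \<Rightarrow> 's \<Rightarrow> 's \<Rightarrow> bool" where
  "reach P s t \<longleftrightarrow> (\<exists>n. nstep P n s t > 0)"

definition recurrent :: "('s::finite \<Rightarrow> 's \<Rightarrow> real) \<Rightarrow> 's \<Rightarrow> bool" where
  "recurrent P s \<longleftrightarrow> (\<forall>t. reach P s t \<longrightarrow> reach P t s)"

text \<open>Unichain: exactly one recurrent class (plus possibly transient states).\<close>
definition unichain :: "('s::finite \<Rightarrow> 's \<Rightarrow> real) \<Rightarrow> bool" where
  "unichain P \<longleftrightarrow> (\<exists>s. recurrent P s) \<and>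
     (\<forall>s t. recurrent P s \<and> recurrent P t \<longrightarrow> reach P s t)"

text \<open>avoid P s' n s = probability that the chain started at s has not visited s'
  at times 0,...,n, i.e. Pr(tau_{s,s'} > n).\<close>
fun avoid :: "('s::finite \<Rightarrow> 's \<Rightarrow> real) \<Rightarrow> 's \<Rightarrow> nat \<Rightarrow> 's \<Rightarrow> real" where
  "avoid P s' 0 s = (if s = s' then 0 else 1)"
| "avoid P s' (Suc n) s = (if s = s' then 0 else (\<Sum>u\<in>UNIV. P s u * avoid P s' n u))"

text \<open>Expected hitting time E[tau_{s,s'}] = sum_n Pr(tau > n), tau = min{t >= 0. X_t = s'}.\<close>
definition hit_time :: "('s::finite \<Rightarrow> 's \<Rightarrow> real) \<Rightarrow> 's \<Rightarrow> 's \<Rightarrow> real" where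
  "hit_time P s s' = (\<Sum>n. avoid P s' n s)"

definition diameter :: "('s::finite \<Rightarrow> 's \<Rightarrow> real) \<Rightarrow> real" where
  "diameter P = Max {hit_time P s s' | s s'. recurrent P s'}"

definition span :: "('s::finite \<Rightarrow> real) \<Rightarrow> real" where
  "span v = Max (range v) - Min (range v)"

definition vnorm :: "('s::finite \<Rightarrow> real) \<Rightarrow> real" where
  "vnorm v = Max (range (\<lambda>s. \<bar>v s\<bar>))"

definition mnorm :: "('s::finite \<Rightarrow> 's \<Rightarrow> real) \<Rightarrow> real" where
  "mnorm A = Max (range (\<lambda>s. \<Sum>s'\<in>UNIV. \<bar>A s s'\<bar>))"

text \<open>Policy = set of states where action 1 is played.\<close>
definition polP :: "('s \<Rightarrow> 's \<Rightarrow> real) \<Rightarrow> ('s \<Rightarrow> 's \<Rightarrow> real) \<Rightarrow> 's set \<Rightarrow> 's \<Rightarrow> 's \<Rightarrow> real" where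
  "polP P0 P1 \<pi> s = (if s \<in> \<pi> then P1 s else P0 s)"

definition polr :: "('s \<Rightarrow> real) \<Rightarrow> ('s \<Rightarrow> real) \<Rightarrow> real \<Rightarrow> 's set \<Rightarrow> 's \<Rightarrow> real" where
  "polr r0 r1 lam \<pi> s = (if s \<in> \<pi> then r1 s - lam else r0 s)"

definition exp_rew :: "('s::finite \<Rightarrow> 's \<Rightarrow> real) \<Rightarrow> ('s \<Rightarrow> real) \<Rightarrow> nat \<Rightarrow> 's \<Rightarrow> real" where
  "exp_rew P r t s = (\<Sum>u\<in>UNIV. nstep P t s u * r u)"

definition gain :: "('s::finite \<Rightarrow> 's \<Rightarrow> real) \<Rightarrow> ('s \<Rightarrow> real) \<Rightarrow> 's \<Rightarrow> real" where
  "gain P r s = lim (\<lambda>T. (\<Sum>t<T. exp_rew P r t s) / real T)"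

definition bias :: "('s::finite \<Rightarrow> 's \<Rightarrow> real) \<Rightarrow> ('s \<Rightarrow> real) \<Rightarrow> 's \<Rightarrow> real" where
  "bias P r s = lim (\<lambda>N. (\<Sum>n\<in>{1..N}. \<Sum>t<n. (exp_rew P r t s - gain P r s)) / real N)"

definition gain_opt :: "('s::finite \<Rightarrow> 's \<Rightarrow> real) \<Rightarrow> ('s \<Rightarrow> 's \<Rightarrow> real) \<Rightarrow>
    ('s \<Rightarrow> real) \<Rightarrow> ('s \<Rightarrow> real) \<Rightarrow> real \<Rightarrow> 's set \<Rightarrow> bool" where
  "gain_opt P0 P1 r0 r1 lam \<pi> \<longleftrightarrow>
     (\<forall>\<pi>' s. gain (polP P0 P1 \<pi>') (polr r0 r1 lam \<pi>') s \<le> gain (polP P0 P1 \<pi>) (polr r0 r1 lam \<pi>) s)"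

definition bias_opt :: "('s::finite \<Rightarrow> 's \<Rightarrow> real) \<Rightarrow> ('s \<Rightarrow> 's \<Rightarrow> real) \<Rightarrow>
    ('s \<Rightarrow> real) \<Rightarrow> ('s \<Rightarrow> real) \<Rightarrow> real \<Rightarrow> 's set \<Rightarrow> bool" where
  "bias_opt P0 P1 r0 r1 lam \<pi> \<longleftrightarrow> gain_opt P0 P1 r0 r1 lam \<pi> \<and>
     (\<forall>\<pi>'. gain_opt P0 P1 r0 r1 lam \<pi>' \<longrightarrow>
        (\<forall>s. bias (polP P0 P1 \<pi>') (polr r0 r1 lam \<pi>') s \<le> bias (polP P0 P1 \<pi>) (polr r0 r1 lam \<pi>) s))"

end

theory Submission
  imports Defs
begin



definition stoch :: "real^'n^'n \<Rightarrow> bool" where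
  "stoch M \<longleftrightarrow> (\<forall>i j. 0 \<le> M$i$j) \<and> (\<forall>i. (\<Sum>j\<in>UNIV. M$i$j) = 1)"

fun mpow :: "real^'n^'n \<Rightarrow> nat \<Rightarrow> real^'n^'n" where
  "mpow M 0 = mat 1"
| "mpow M (Suc n) = mpow M n ** M"

definition ces :: "real^'n^'n \<Rightarrow> nat \<Rightarrow> real^'n^'n" where
  "ces M T = scaleR (1 / real T) (\<Sum>t<T. mpow M t)"

lemma mpow_add: "mpow M (m + n) = mpow M m ** mpow M n"
  by (induction n) (auto simp: matrix_mul_assoc)

lemma mpow_comm: "M ** mpow M n = mpow M n ** M"
  by (induction n) (auto simp: matrix_mul_assoc)

lemma stoch_mat1: "stoch (mat 1 :: real^'n^'n)"
  unfolding stoch_def by (auto simp: mat_def if_distrib cong: if_cong)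

lemma stoch_mult:
  assumes "stoch A" "stoch B" shows "stoch (A ** B)"
proof -
  have "\<forall>i j. 0 \<le> (A ** B)$i$j"
    using assms by (auto simp: stoch_def matrix_matrix_mult_def intro!: sum_nonneg)
  moreover have "(\<Sum>j\<in>UNIV. (A ** B)$i$j) = 1" for i
  proof -
    have "(\<Sum>j\<in>UNIV. (A ** B)$i$j) = (\<Sum>j\<in>UNIV. \<Sum>k\<in>UNIV. A$i$k * B$k$j)"
      by (simp add: matrix_matrix_mult_def)
    also have "\<dots> = (\<Sum>k\<in>UNIV. A$i$k * (\<Sum>j\<in>UNIV. B$k$j))"
      by (subst sum.swap) (simp add: sum_distrib_left)
    also have "\<dots> = 1" using assms by (simp add: stoch_def)
    finally show ?thesis .
  qed
  ultimately show ?thesis by (simp add: stoch_def)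
qed

lemma stoch_mpow: "stoch M \<Longrightarrow> stoch (mpow M n)"
  by (induction n) (auto simp: stoch_mat1 stoch_mult)

lemma stoch_le1:
  assumes "stoch A" shows "A$i$j \<le> 1"
proof -
  have "A$i$j \<le> (\<Sum>j\<in>UNIV. A$i$j)"
    using assms by (intro member_le_sum) (auto simp: stoch_def)
  thus ?thesis using assms by (simp add: stoch_def)
qed

lemma stoch_ces: assumes "stoch M" "T > 0" shows "stoch (ces M T)"
proof -
  have "\<forall>i j. 0 \<le> ces M T$i$j"
    using assms stoch_mpow[OF assms(1)] by (auto simp: ces_def stoch_def sum_component intro!: sum_nonneg divide_nonneg_nonneg)
  moreover have "(\<Sum>j\<in>UNIV. ces M T$i$j) = 1" for i
  proof -
    have "(\<Sum>j\<in>UNIV. ces M T$i$j) = (1/real T) * (\<Sum>t<T. \<Sum>j\<in>UNIV. mpow M t$i$j)"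
      by (simp add: ces_def sum_component sum_distrib_left) (subst sum.swap, simp)
    also have "\<dots> = 1" using stoch_mpow[OF assms(1)] assms(2) by (simp add: stoch_def)
    finally show ?thesis .
  qed
  ultimately show ?thesis by (simp add: stoch_def)
qed

lemma ces_entry_bounds: assumes "stoch M" shows "0 \<le> ces M T$i$j \<and> ces M T$i$j \<le> 1"
proof (cases "T = 0")
  case True thus ?thesis by (simp add: ces_def)
next
  case False thus ?thesis using stoch_ces[OF assms, of T] stoch_le1[of "ces M T" i j] by (auto simp: stoch_def)
qed

lemma bounded_ces: fixes M :: "real^'n^'n" assumes "stoch M" shows "bounded (range (ces M))"
proof -
  have "norm (ces M T) \<le> real CARD('n) * real CARD('n)" for T
  proof -
    have "norm (ces M T) \<le> (\<Sum>i\<in>UNIV. norm (ces M T $ i))" unfolding norm_vec_def by (rule L2_set_le_sum) auto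
    also have "\<dots> \<le> (\<Sum>i\<in>UNIV. \<Sum>j\<in>UNIV. \<bar>ces M T $ i $ j\<bar>)"
      by (intro sum_mono norm_le_l1_cart)
    also have "\<dots> \<le> (\<Sum>i\<in>(UNIV::'n set). \<Sum>j\<in>(UNIV::'n set). 1)"
      proof (rule sum_mono, rule sum_mono)
      fix i j show "\<bar>ces M T $ i $ j\<bar> \<le> 1" using ces_entry_bounds[OF assms, of T i j] by simp
    qed
    finally show ?thesis by simp
  qed
  thus ?thesis by (auto simp: bounded_iff)
qed

lemma mat_tendstoI:
  assumes "\<And>i j. ((\<lambda>x. f x $ i $ j) \<longlongrightarrow> A $ i $ j) F"
  shows "(f \<longlongrightarrow> (A::real^'n^'m)) F"
  by (intro vec_tendstoI assms)

lemma mat_tendstoD: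
  assumes "(f \<longlongrightarrow> (A::real^'n^'m)) F"
  shows "((\<lambda>x. f x $ i $ j) \<longlongrightarrow> A $ i $ j) F"
  by (intro tendsto_vec_nth assms)

lemma tendsto_mmult_right:
  assumes "(f \<longlongrightarrow> (A::real^'n^'m)) F"
  shows "((\<lambda>x. f x ** (C::real^'k^'n)) \<longlongrightarrow> A ** C) F"
  by (rule mat_tendstoI) (simp add: matrix_matrix_mult_def, intro tendsto_intros mat_tendstoD assms)

lemma tendsto_mmult_left:
  assumes "(f \<longlongrightarrow> (A::real^'n^'m)) F"
  shows "((\<lambda>x. (C::real^'m^'k) ** f x) \<longlongrightarrow> C ** A) F"
  by (rule mat_tendstoI) (simp add: matrix_matrix_mult_def, intro tendsto_intros mat_tendstoD assms)

lemma tendsto_mvec: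
  assumes "(f \<longlongrightarrow> (A::real^'n^'m)) F"
  shows "((\<lambda>x. f x *v (v::real^'n)) \<longlongrightarrow> A *v v) F"
  by (rule vec_tendstoI) (simp add: matrix_vector_mult_def, intro tendsto_intros mat_tendstoD assms)

lemma mm_diff_l: "(A::real^'n^'m) ** (B - C) = A ** B - A ** C"
  by (simp add: matrix_matrix_mult_def vec_eq_iff sum_subtractf algebra_simps)
lemma mm_diff_r: "((A::real^'n^'m) - B) ** C = A ** C - B ** C"
  by (simp add: matrix_matrix_mult_def vec_eq_iff sum_subtractf algebra_simps)
lemma mm_add_r: "((A::real^'n^'m) + B) ** C = A ** C + B ** C"
  by (simp add: matrix_matrix_mult_def vec_eq_iff sum.distrib algebra_simps)
lemma mm_scale_l: "(A::real^'n^'m) ** (c *\<^sub>R B) = c *\<^sub>R (A ** B)"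
  by (simp add: matrix_matrix_mult_def vec_eq_iff sum_distrib_left algebra_simps)
lemma mm_scale_r: "(c *\<^sub>R (A::real^'n^'m)) ** B = c *\<^sub>R (A ** B)"
  by (simp add: matrix_matrix_mult_def vec_eq_iff sum_distrib_left algebra_simps)
lemma mm_sum_r: "(\<Sum>x\<in>S. f x) ** (C::real^'k^'n) = (\<Sum>x\<in>S. f x ** C)"
  by (induction S rule: infinite_finite_induct) (auto simp: mm_add_r)
lemma mm_sum_l: "(C::real^'n^'m) ** (\<Sum>x\<in>S. f x) = (\<Sum>x\<in>S. C ** f x)"
  by (induction S rule: infinite_finite_induct) (auto simp: matrix_add_ldistrib)
lemma mv_sum_l: "(\<Sum>x\<in>S. f x) *v (v::real^'n) = (\<Sum>x\<in>S. f x *v v)"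
  by (induction S rule: infinite_finite_induct) (auto simp: matrix_vector_mult_add_rdistrib)
lemma mv_scale_l: "(c *\<^sub>R (A::real^'n^'m)) *v v = c *\<^sub>R (A *v v)"
  by (simp add: matrix_vector_mult_def vec_eq_iff sum_distrib_left algebra_simps)

lemma mv_scale_r: "(A::real^'n^'m) *v (c *\<^sub>R v) = c *\<^sub>R (A *v v)"
  by (simp add: matrix_vector_mult_def vec_eq_iff sum_distrib_left algebra_simps)

lemma sum_mpow_telescope: "(\<Sum>t<T. mpow M t) ** (mat 1 - M) = mat 1 - mpow M T"
proof (induction T)
  case (Suc T)
  have "(\<Sum>t<Suc T. mpow M t) ** (mat 1 - M) = (\<Sum>t<T. mpow M t) ** (mat 1 - M) + mpow M T ** (mat 1 - M)"
    by (simp add: mm_add_r)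
  also have "\<dots> = mat 1 - mpow M T + (mpow M T - mpow M T ** M)" by (subst Suc.IH) (simp add: mm_diff_l)
  finally show ?case by simp
qed simp

lemma sum_mpow_telescope': "(mat 1 - M) ** (\<Sum>t<T. mpow M t) = mat 1 - mpow M T"
proof -
  have "(mat 1 - M) ** (\<Sum>t<T. mpow M t) = (\<Sum>t<T. mpow M t) ** (mat 1 - M)"
    by (simp add: mm_sum_l mm_sum_r mm_diff_l mm_diff_r mpow_comm sum_subtractf)
  thus ?thesis by (simp add: sum_mpow_telescope)
qed

lemma lim_ev_const:
  fixes X :: "nat \<Rightarrow> 'a::t2_space"
  assumes "X \<longlonglongrightarrow> a" "\<forall>\<^sub>F n in sequentially. X n = c" shows "a = c"
proof -
  have "(\<lambda>n. c) \<longlonglongrightarrow> a" by (rule tendsto_cong[OF assms(2), THEN iffD1, OF assms(1)])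
  hence "c = a" by (simp only: LIMSEQ_const_iff)
  thus ?thesis by (rule sym)
qed

lemma mpow_L: assumes "M ** L = L" shows "mpow M t ** L = L"
proof (induction t)
  case (Suc t)
  have "mpow M (Suc t) ** L = mpow M t ** (M ** L)" by (simp only: mpow.simps matrix_mul_assoc)
  thus ?case using assms Suc.IH by simp
qed simp

lemma L_mpow: assumes "L ** M = L" shows "L ** mpow M t = L"
proof (induction t)
  case (Suc t)
  have "L ** mpow M (Suc t) = (L ** mpow M t) ** M" by (simp only: mpow.simps matrix_mul_assoc)
  thus ?case using assms Suc.IH by simp
qed simp

lemma ces_L: assumes "M ** L = L" "T > 0" shows "ces M T ** L = L"
proof -
  have "ces M T ** L = scaleR (1 / real T) (\<Sum>t<T. L)"
    by (simp add: ces_def mm_scale_r mm_sum_r mpow_L[OF assms(1)] del: sum_constant)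
  also have "\<dots> = L" using assms(2) by (simp only: sum_constant_scaleR card_lessThan) simp
  finally show ?thesis .
qed

lemma L_ces: assumes "L ** M = L" "T > 0" shows "L ** ces M T = L"
proof -
  have "L ** ces M T = scaleR (1 / real T) (\<Sum>t<T. L)"
    by (simp add: ces_def mm_scale_l mm_sum_l L_mpow[OF assms(1)] del: sum_constant)
  also have "\<dots> = L" using assms(2) by (simp only: sum_constant_scaleR card_lessThan) simp
  finally show ?thesis .
qed


lemma vanish:
  fixes M :: "real^'n^'n" assumes st: "stoch M"
  shows "(\<lambda>T. scaleR (1/real T) (mat 1 - mpow M T)) \<longlonglongrightarrow> 0"
proof (rule mat_tendstoI)
  fix i j
  have b: "\<bar>(mat 1 - mpow M T) $ i $ j\<bar> \<le> 1" for T
    using stoch_mpow[OF st, of T] stoch_le1[OF stoch_mpow[OF st], of T i j]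
    by (auto simp: mat_def stoch_def)
  have "(\<lambda>T. (1/real T) * (mat 1 - mpow M T) $ i $ j) \<longlonglongrightarrow> 0"
  proof (rule Lim_null_comparison[OF _ lim_1_over_n])
    show "\<forall>\<^sub>F T in sequentially. norm ((1/real T) * (mat 1 - mpow M T) $ i $ j) \<le> 1 / real T"
      using b by (auto simp: abs_mult intro!: always_eventually divide_right_mono)
  qed
  thus "((\<lambda>T. scaleR (1/real T) (mat 1 - mpow M T) $ i $ j) \<longlongrightarrow> (0::real^'n^'n) $ i $ j) sequentially"
    by simp
qed

lemma ces_conv:
  fixes M :: "real^'n^'n" assumes st: "stoch M"
  shows "\<exists>L. (ces M \<longlonglongrightarrow> L) \<and> stoch L \<and> L ** M = L \<and> M ** L = L \<and> L ** L = L"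
proof -
  obtain L r where r: "strict_mono r" and lim: "(ces M \<circ> r) \<longlonglongrightarrow> L"
    using bounded_imp_convergent_subsequence[OF bounded_ces[OF st]] by blast
  have lim': "(\<lambda>k. ces M (r k)) \<longlonglongrightarrow> L" using lim by (simp add: o_def)
  have rpos: "\<forall>\<^sub>F k in sequentially. r k > 0"
  proof (rule eventually_sequentiallyI[of 1])
    fix k :: nat assume "1 \<le> k" thus "r k > 0" using seq_suble[OF r, of k] by linarith
  qed
  have cI: "ces M T ** (mat 1 - M) = scaleR (1/real T) (mat 1 - mpow M T)" for T
    by (simp add: ces_def mm_scale_r sum_mpow_telescope)
  have Ic: "(mat 1 - M) ** ces M T = scaleR (1/real T) (mat 1 - mpow M T)" for T
    by (simp add: ces_def mm_scale_l sum_mpow_telescope')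
  have van: "(\<lambda>k. scaleR (1/real (r k)) (mat 1 - mpow M (r k))) \<longlonglongrightarrow> 0"
    using LIMSEQ_subseq_LIMSEQ[OF vanish[OF st] r] by (simp add: o_def)
  have "(\<lambda>k. ces M (r k) ** (mat 1 - M)) \<longlonglongrightarrow> L ** (mat 1 - M)"
    by (rule tendsto_mmult_right[OF lim'])
  hence "L ** (mat 1 - M) = 0" using van unfolding cI using LIMSEQ_unique by blast
  hence hLM: "L ** M = L" by (simp add: mm_diff_l)
  have "(\<lambda>k. (mat 1 - M) ** ces M (r k)) \<longlonglongrightarrow> (mat 1 - M) ** L"
    by (rule tendsto_mmult_left[OF lim'])
  hence "(mat 1 - M) ** L = 0" using van unfolding Ic using LIMSEQ_unique by blast
  hence hML: "M ** L = L" by (simp add: mm_diff_r)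
  have "(\<lambda>k. L ** ces M (r k)) \<longlonglongrightarrow> L ** L" by (rule tendsto_mmult_left[OF lim'])
  moreover have "\<forall>\<^sub>F k in sequentially. L ** ces M (r k) = L"
    using rpos by eventually_elim (simp add: L_ces[OF hLM])
  ultimately have LL: "L ** L = L" by (rule lim_ev_const)
  have stL: "stoch L"
    unfolding stoch_def
  proof safe
    fix i j
    show "0 \<le> L $ i $ j"
      by (rule tendsto_lowerbound[OF mat_tendstoD[OF lim']]) (use ces_entry_bounds[OF st] in auto)
  next
    fix i
    have "(\<lambda>k. \<Sum>j\<in>UNIV. ces M (r k) $ i $ j) \<longlonglongrightarrow> (\<Sum>j\<in>UNIV. L $ i $ j)"
      by (intro tendsto_sum mat_tendstoD[OF lim'])
    moreover have "\<forall>\<^sub>F k in sequentially. (\<Sum>j\<in>UNIV. ces M (r k) $ i $ j) = 1"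
      using rpos by eventually_elim (use stoch_ces[OF st] in \<open>auto simp: stoch_def\<close>)
    ultimately show "(\<Sum>j\<in>UNIV. L $ i $ j) = 1" by (rule lim_ev_const)
  qed
  define V where "V = range (\<lambda>w. (mat 1 - M) *v w)"
  have subV: "subspace V"
    unfolding subspace_def V_def
  proof safe
    show "0 \<in> range (\<lambda>w. (mat 1 - M) *v w)" by (auto intro!: image_eqI[of _ _ 0])
  next
    fix a b show "(mat 1 - M) *v a + (mat 1 - M) *v b \<in> range (\<lambda>w. (mat 1 - M) *v w)"
      by (auto simp: matrix_vector_right_distrib intro!: image_eqI[of _ _ "a + b"])
  next
    fix c a show "c *\<^sub>R ((mat 1 - M) *v a) \<in> range (\<lambda>w. (mat 1 - M) *v w)"
      by (auto simp: mv_scale_r intro!: image_eqI[of _ _ "c *\<^sub>R a"])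
  qed
  have clV: "closed V" by (rule closed_subspace[OF subV])
  have rangeI: "(mat 1 - L) *v x \<in> V" for x
  proof -
    define W where "W T = scaleR (1/real T) (\<Sum>t<T. \<Sum>j<t. mpow M j)" for T
    have IW: "(mat 1 - M) ** W T = mat 1 - ces M T" if "T > 0" for T
    proof -
      have "(mat 1 - M) ** W T = scaleR (1/real T) ((mat 1 - M) ** (\<Sum>t<T. \<Sum>j<t. mpow M j))"
        by (simp only: W_def mm_scale_l)
      also have "\<dots> = scaleR (1/real T) (\<Sum>t<T. (mat 1 - M) ** (\<Sum>j<t. mpow M j))"
        by (simp only: mm_sum_l[of "mat 1 - M" "\<lambda>t. \<Sum>j<t. mpow M j"])
      also have "\<dots> = scaleR (1/real T) (\<Sum>t<T. mat 1 - mpow M t)"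
        by (simp only: sum_mpow_telescope')
      finally have "(mat 1 - M) ** W T = scaleR (1/real T) (\<Sum>t<T. mat 1 - mpow M t)" .
      also have "\<dots> = scaleR (1/real T) (scaleR (real T) (mat 1) - (\<Sum>t<T. mpow M t))"
        by (simp add: sum_subtractf sum_constant_scaleR del: sum_constant)
      also have "\<dots> = mat 1 - ces M T" using that by (simp add: ces_def scaleR_diff_right)
      finally show ?thesis .
    qed
    have "\<forall>k. (mat 1 - ces M (r (Suc k))) *v x \<in> V"
    proof
      fix k
      have "r (Suc k) > 0" using seq_suble[OF r, of "Suc k"] by simp
      hence "(mat 1 - ces M (r (Suc k))) *v x = (mat 1 - M) *v (W (r (Suc k)) *v x)"
        by (simp add: IW matrix_vector_mul_assoc)
      thus "(mat 1 - ces M (r (Suc k))) *v x \<in> V" by (simp add: V_def)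
    qed
    moreover have "(\<lambda>k. (mat 1 - ces M (r (Suc k))) *v x) \<longlonglongrightarrow> (mat 1 - L) *v x"
      by (intro tendsto_mvec tendsto_diff tendsto_const) (use LIMSEQ_Suc[OF lim'] in simp)
    ultimately show ?thesis
      using closed_sequential_limits[THEN iffD1, OF clV, rule_format, of "\<lambda>k. (mat 1 - ces M (r (Suc k))) *v x" "(mat 1 - L) *v x"]
      by simp
  qed
  have vconv: "(\<lambda>T. ces M T *v x) \<longlonglongrightarrow> L *v x" for x
  proof -
    obtain w where w: "(mat 1 - L) *v x = (mat 1 - M) *v w" using rangeI[of x] by (auto simp: V_def)
    have xdec: "x = L *v x + (mat 1 - M) *v w"
      using w by (simp add: matrix_vector_mult_diff_rdistrib) (metis add.commute diff_add_cancel)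
    have ev: "\<forall>\<^sub>F T in sequentially. ces M T *v x = L *v x + (scaleR (1/real T) (mat 1 - mpow M T)) *v w"
    proof (rule eventually_sequentiallyI[of 1])
      fix T :: nat assume "T \<ge> 1"
      hence "ces M T *v x = (ces M T ** L) *v x + (ces M T ** (mat 1 - M)) *v w"
        by (subst xdec) (simp add: matrix_vector_right_distrib matrix_vector_mul_assoc)
      thus "ces M T *v x = L *v x + (scaleR (1/real T) (mat 1 - mpow M T)) *v w"
        using \<open>T \<ge> 1\<close> by (simp add: ces_L[OF hML] cI)
    qed
    have "(\<lambda>T. L *v x + (scaleR (1/real T) (mat 1 - mpow M T)) *v w) \<longlonglongrightarrow> L *v x + 0 *v w"
      by (intro tendsto_add tendsto_const tendsto_mvec vanish st)
    hence "(\<lambda>T. L *v x + (scaleR (1/real T) (mat 1 - mpow M T)) *v w) \<longlonglongrightarrow> L *v x" by simp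
    thus ?thesis by (rule tendsto_cong[OF ev, THEN iffD2])
  qed
  have "ces M \<longlonglongrightarrow> L"
  proof (rule mat_tendstoI)
    fix i j
    have e: "(A *v axis j 1) $ i = A $ i $ j" for A :: "real^'n^'n"
      by (simp add: matrix_vector_mult_def axis_def if_distrib cong: if_cong)
    show "(\<lambda>T. ces M T $ i $ j) \<longlonglongrightarrow> L $ i $ j"
      using tendsto_vec_nth[OF vconv[of "axis j 1"], of i] unfolding e .
  qed
  thus ?thesis using stL hLM hML LL by blast
qed


lemma mpow_fix: assumes "M *v x = x" shows "mpow M t *v x = x"
proof (induction t)
  case (Suc t)
  have "mpow M (Suc t) *v x = mpow M t *v (M *v x)" by (simp add: matrix_vector_mul_assoc)
  thus ?case using assms Suc.IH by simp
qed simp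

lemma ces_fix: assumes "M *v x = x" "T > 0" shows "ces M T *v x = x"
proof -
  have "ces M T *v x = scaleR (1 / real T) (\<Sum>t<T. x)"
    by (simp add: ces_def mv_scale_l mv_sum_l mpow_fix[OF assms(1)] del: sum_constant)
  also have "\<dots> = x" using assms(2) by (simp only: sum_constant_scaleR card_lessThan) simp
  finally show ?thesis .
qed

lemma poisson_vec:
  fixes M :: "real^'n^'n"
  assumes lim: "ces M \<longlonglongrightarrow> L" and hLM: "L ** M = L" and hML: "M ** L = L" and LL: "L ** L = L"
  shows "\<exists>h. L *v h = 0 \<and> h - M *v h = r - L *v r"
proof -
  define Y where "Y = mat 1 - M + L"
  have LY: "L ** Y = L" by (simp add: Y_def matrix_add_ldistrib mm_diff_l hLM LL)
  have inj: "x = 0" if "Y *v x = 0" for x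
  proof -
    have "L *v x = L *v (Y *v x)" by (simp add: matrix_vector_mul_assoc LY)
    hence Lx: "L *v x = 0" using that by simp
    have "Y *v x = x - M *v x + L *v x"
      by (simp add: Y_def matrix_vector_mult_add_rdistrib matrix_vector_mult_diff_rdistrib)
    hence Mx: "M *v x = x" using that Lx by simp
    have "(\<lambda>T. ces M T *v x) \<longlonglongrightarrow> L *v x" by (rule tendsto_mvec[OF lim])
    moreover have "\<forall>\<^sub>F T in sequentially. ces M T *v x = x"
      by (rule eventually_sequentiallyI[of 1]) (simp add: ces_fix[OF Mx])
    ultimately have "L *v x = x" by (rule lim_ev_const)
    thus ?thesis using Lx by simp
  qed
  obtain B where "B ** Y = mat 1" using matrix_left_invertible_ker[of Y] inj by blast
  hence YB: "Y ** B = mat 1" using matrix_left_right_inverse by blast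
  define h where "h = B *v (r - L *v r)"
  have Yh: "Y *v h = r - L *v r" by (simp add: h_def matrix_vector_mul_assoc YB)
  have "L *v h = L *v (Y *v h)" by (simp add: matrix_vector_mul_assoc LY)
  also have "\<dots> = 0" using Yh by (simp add: matrix_vector_mult_diff_distrib matrix_vector_mul_assoc LL)
  finally have Lh: "L *v h = 0" .
  have "Y *v h = h - M *v h + L *v h"
    by (simp add: Y_def matrix_vector_mult_add_rdistrib matrix_vector_mult_diff_rdistrib)
  hence "h - M *v h = r - L *v r" using Yh Lh by simp
  thus ?thesis using Lh by blast
qed




definition matf :: "('s::finite \<Rightarrow> 's \<Rightarrow> real) \<Rightarrow> real^'s^'s" where
  "matf P = (\<chi> i j. P i j)"
definition vecf :: "('s::finite \<Rightarrow> real) \<Rightarrow> real^'s" where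
  "vecf r = (\<chi> i. r i)"

lemma nstep_mpow: "nstep P n s t = mpow (matf P) n $ s $ t"
  by (induction n arbitrary: t) (auto simp: mat_def matrix_matrix_mult_def matf_def)

lemma stoch_matf: "stochastic P \<Longrightarrow> stoch (matf P)"
  by (simp add: stochastic_def stoch_def matf_def)

lemma nstep_nonneg: assumes "stochastic P" shows "0 \<le> nstep P n s t"
  using stoch_mpow[OF stoch_matf[OF assms], of n] by (simp add: nstep_mpow stoch_def)

lemma nstep_rowsum: assumes "stochastic P" shows "(\<Sum>t\<in>UNIV. nstep P n s t) = 1"
  using stoch_mpow[OF stoch_matf[OF assms], of n] by (simp add: nstep_mpow stoch_def)

lemma nstep_add: "nstep P (m + n) s t = (\<Sum>u\<in>UNIV. nstep P m s u * nstep P n u t)"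
  by (simp add: nstep_mpow mpow_add matrix_matrix_mult_def)

lemma sum_delta_l: fixes f :: "'s::finite \<Rightarrow> real" shows "(\<Sum>u\<in>UNIV. (if s = u then 1 else 0) * (f u::real)) = f s"
proof -
  have "\<And>u. (if s = u then 1 else 0) * f u = (if u = s then f s else 0)" by auto
  thus ?thesis by simp
qed

lemma sum_delta_r: fixes f :: "'s::finite \<Rightarrow> real" shows "(\<Sum>u\<in>UNIV. (f u::real) * (if u = v then 1 else 0)) = f v"
proof -
  have "\<And>u. f u * (if u = v then 1 else 0) = (if u = v then f v else 0)" by auto
  thus ?thesis by simp
qed

lemma nstep_one: "nstep P (Suc 0) s t = P s t"
proof -
  have "\<And>u. (if s = u then 1 else 0) * P u t = (if u = s then P s t else 0)" by auto
  thus ?thesis by simp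
qed

lemma nstep_first: "nstep P (Suc n) s t = (\<Sum>u\<in>UNIV. P s u * nstep P n u t)"
  using nstep_add[of P "Suc 0" n s t] unfolding nstep_one by simp

lemma exp_rew_vec: "exp_rew P r t s = (mpow (matf P) t *v vecf r) $ s"
  by (simp add: exp_rew_def nstep_mpow matrix_vector_mult_def vecf_def)

lemma ces_entry: "ces M T $ s $ u = (\<Sum>t<T. mpow M t $ s $ u) / real T"
  by (simp add: ces_def sum_component)

lemma bridge:
  fixes P :: "'s::finite \<Rightarrow> 's \<Rightarrow> real"
  assumes st: "stochastic P"
  obtains Ps where "\<forall>s u. 0 \<le> Ps s u" "\<forall>s. (\<Sum>u\<in>UNIV. Ps s u) = 1"
    "\<forall>s v. (\<Sum>u\<in>UNIV. Ps s u * P u v) = Ps s v"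
    "\<forall>s v. (\<Sum>u\<in>UNIV. P s u * Ps u v) = Ps s v"
    "\<forall>r s. gain P r s = (\<Sum>u\<in>UNIV. Ps s u * r u)"
    "\<forall>r s. (\<Sum>u\<in>UNIV. Ps s u * bias P r u) = 0"
    "\<forall>r s. bias P r s - (\<Sum>u\<in>UNIV. P s u * bias P r u) = r s - (\<Sum>u\<in>UNIV. Ps s u * r u)"
    "\<forall>e. (\<forall>s. (\<Sum>u\<in>UNIV. P s u * e u) \<le> e s) \<longrightarrow> (\<forall>s. (\<Sum>u\<in>UNIV. Ps s u * e u) \<le> e s)"
    "\<forall>\<mu>. (\<forall>v. (\<Sum>y\<in>UNIV. \<mu> y * P y v) = \<mu> v) \<longrightarrow> (\<forall>v. (\<Sum>y\<in>UNIV. \<mu> y * Ps y v) = \<mu> v)"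
proof -
  define M where "M = matf P"
  have stM: "stoch M" using st by (simp add: M_def stoch_matf)
  obtain L where lim: "ces M \<longlonglongrightarrow> L" and stL: "stoch L" and hLM: "L ** M = L" and hML: "M ** L = L"
    and LL: "L ** L = L"
    using ces_conv[OF stM] by blast
  define Ps where "Ps s u = L $ s $ u" for s u
  have Mij: "M $ i $ j = P i j" for i j by (simp add: M_def matf_def)
  have cesf: "(\<lambda>T. (\<Sum>t<T. nstep P t s u) / real T) \<longlonglongrightarrow> Ps s u" for s u
    using mat_tendstoD[OF lim, of s u] by (simp add: ces_entry nstep_mpow M_def Ps_def)
  have c1: "\<forall>s u. 0 \<le> Ps s u" using stL by (simp add: stoch_def Ps_def)
  have c2: "\<forall>s. (\<Sum>u\<in>UNIV. Ps s u) = 1" using stL by (simp add: stoch_def Ps_def)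
  have c3: "\<forall>s v. (\<Sum>u\<in>UNIV. Ps s u * P u v) = Ps s v"
    using hLM by (auto simp: Ps_def vec_eq_iff matrix_matrix_mult_def Mij)
  have c4: "\<forall>s v. (\<Sum>u\<in>UNIV. P s u * Ps u v) = Ps s v"
    using hML by (auto simp: Ps_def vec_eq_iff matrix_matrix_mult_def Mij)
  have gainv: "gain P r s = (L *v vecf r) $ s" for r s
  proof -
    have "(\<lambda>T. (\<Sum>t<T. exp_rew P r t s) / real T) \<longlonglongrightarrow> (L *v vecf r) $ s"
    proof -
      have "(\<lambda>T. (ces M T *v vecf r) $ s) \<longlonglongrightarrow> (L *v vecf r) $ s"
        by (intro tendsto_vec_nth tendsto_mvec lim)
      moreover have "(ces M T *v vecf r) $ s = (\<Sum>t<T. exp_rew P r t s) / real T" for T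
        by (simp add: ces_def mv_scale_l mv_sum_l sum_component exp_rew_vec M_def)
      ultimately show ?thesis by simp
    qed
    thus ?thesis unfolding gain_def by (rule limI)
  qed
  have c5: "\<forall>r s. gain P r s = (\<Sum>u\<in>UNIV. Ps s u * r u)"
    by (simp add: gainv matrix_vector_mult_def vecf_def Ps_def)
  have biasv: "\<exists>h. L *v h = 0 \<and> h - M *v h = vecf r - L *v vecf r \<and> (\<forall>s. bias P r s = h $ s)" for r
  proof -
    obtain h where Lh: "L *v h = 0" and hP: "h - M *v h = vecf r - L *v vecf r"
      using poisson_vec[OF lim hLM hML LL] by blast
    have partial: "(\<Sum>t<n. mpow M t *v vecf r - L *v vecf r) = h - mpow M n *v h" for n
    proof -
      have "(\<Sum>t<n. mpow M t *v vecf r - L *v vecf r) = (\<Sum>t<n. mpow M t *v (vecf r - L *v vecf r))"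
        by (intro sum.cong refl)
           (simp add: matrix_vector_mult_diff_distrib matrix_vector_mul_assoc mpow_L[OF hML])
      also have "\<dots> = (\<Sum>t<n. mpow M t) *v (h - M *v h)"
        by (simp add: mv_sum_l hP[symmetric])
      also have "\<dots> = (\<Sum>t<n. mpow M t) *v ((mat 1 - M) *v h)"
        by (simp add: matrix_vector_mult_diff_rdistrib)
      also have "\<dots> = ((\<Sum>t<n. mpow M t) ** (mat 1 - M)) *v h"
        by (simp only: matrix_vector_mul_assoc)
      also have "\<dots> = h - mpow M n *v h"
        by (simp only: sum_mpow_telescope matrix_vector_mult_diff_rdistrib matrix_vector_mul_lid)
      finally show ?thesis .
    qed
    define Bv where "Bv N = scaleR (1 / real N) (\<Sum>n\<in>{1..N}. h - mpow M n *v h)" for N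
    have sumshift: "(\<Sum>n\<in>{1..N}. mpow M n) = M ** (\<Sum>t<N. mpow M t)" for N
    proof -
      have "{1..N} = Suc ` {..<N}" by (auto simp: image_iff) (metis Suc_pred' lessThan_iff less_le_trans not_less not_less_eq_eq zero_less_one)
      hence "(\<Sum>n\<in>{1..N}. mpow M n) = (\<Sum>t<N. mpow M (Suc t))" by (simp add: sum.reindex)
      also have "\<dots> = M ** (\<Sum>t<N. mpow M t)" by (simp add: mm_sum_l mpow_comm)
      finally show ?thesis .
    qed
    have Bvform: "Bv N = h - (M ** ces M N) *v h" if "N > 0" for N
    proof -
      have "(\<Sum>n\<in>{1..N}. h - mpow M n *v h) = scaleR (real N) h - (\<Sum>n\<in>{1..N}. mpow M n) *v h"
        by (simp add: sum_subtractf mv_sum_l sum_constant_scaleR del: sum_constant)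
      thus ?thesis using that
        using sumshift[of N] by (simp add: Bv_def ces_def mm_scale_l mv_scale_l scaleR_diff_right)
    qed
    have "(\<lambda>N. h - (M ** ces M N) *v h) \<longlonglongrightarrow> h - (M ** L) *v h"
      by (intro tendsto_diff tendsto_const tendsto_mvec tendsto_mmult_left lim)
    hence conv: "(\<lambda>N. h - (M ** ces M N) *v h) \<longlonglongrightarrow> h" by (simp add: hML Lh)
    have evB: "\<forall>\<^sub>F N in sequentially. Bv N = h - (M ** ces M N) *v h"
      by (rule eventually_sequentiallyI[of 1]) (simp add: Bvform)
    have BvL: "Bv \<longlonglongrightarrow> h" by (rule tendsto_cong[OF evB, THEN iffD2, OF conv])
    have "bias P r s = h $ s" for s
    proof -
      have ps: "(\<Sum>t<n. (exp_rew P r t s - gain P r s)) = h $ s - (mpow M n *v h) $ s" for n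
        using arg_cong[OF partial[of n], of "\<lambda>v. v $ s"]
        by (simp add: sum_component exp_rew_vec gainv M_def[symmetric])
      have "(\<Sum>n\<in>{1..N}. \<Sum>t<n. (exp_rew P r t s - gain P r s)) / real N = Bv N $ s" for N
        by (simp only: ps) (simp add: Bv_def sum_component)
      moreover have "(\<lambda>N. Bv N $ s) \<longlonglongrightarrow> h $ s" by (intro tendsto_vec_nth BvL)
      ultimately have "(\<lambda>N. (\<Sum>n\<in>{1..N}. \<Sum>t<n. (exp_rew P r t s - gain P r s)) / real N) \<longlonglongrightarrow> h $ s"
        by presburger
      thus ?thesis unfolding bias_def by (rule limI)
    qed
    thus ?thesis using Lh hP by blast
  qed
  have c6: "\<forall>r s. (\<Sum>u\<in>UNIV. Ps s u * bias P r u) = 0"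
  proof (intro allI)
    fix r s
    obtain h where "L *v h = 0" "\<forall>s. bias P r s = h $ s" using biasv by blast
    thus "(\<Sum>u\<in>UNIV. Ps s u * bias P r u) = 0"
      by (simp add: Ps_def vec_eq_iff matrix_vector_mult_def)
  qed
  have c7: "\<forall>r s. bias P r s - (\<Sum>u\<in>UNIV. P s u * bias P r u) = r s - (\<Sum>u\<in>UNIV. Ps s u * r u)"
  proof (intro allI)
    fix r s
    obtain h where "h - M *v h = vecf r - L *v vecf r" "\<forall>s. bias P r s = h $ s" using biasv by blast
    thus "bias P r s - (\<Sum>u\<in>UNIV. P s u * bias P r u) = r s - (\<Sum>u\<in>UNIV. Ps s u * r u)"
      by (simp add: Ps_def vec_eq_iff matrix_vector_mult_def Mij vecf_def)
  qed
  have c8: "\<forall>e. (\<forall>s. (\<Sum>u\<in>UNIV. P s u * e u) \<le> e s) \<longrightarrow> (\<forall>s. (\<Sum>u\<in>UNIV. Ps s u * e u) \<le> e s)"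
  proof (intro allI impI)
    fix e s assume sup: "\<forall>s. (\<Sum>u\<in>UNIV. P s u * e u) \<le> e s"
    have step: "(\<Sum>u\<in>UNIV. nstep P t s u * e u) \<le> e s" for t s
    proof (induction t arbitrary: s)
      case (Suc t)
      have "(\<Sum>u\<in>UNIV. nstep P (Suc t) s u * e u) = (\<Sum>w\<in>UNIV. nstep P t s w * (\<Sum>u\<in>UNIV. P w u * e u))"
        by (simp add: sum_distrib_left sum_distrib_right mult.assoc) (rule sum.swap)
      also have "\<dots> \<le> (\<Sum>w\<in>UNIV. nstep P t s w * e w)"
        by (intro sum_mono mult_left_mono sup[rule_format] nstep_nonneg st)
      finally show ?case by (rule order.trans[OF _ Suc.IH])
    qed (simp add: sum_delta_l sum_delta_r)
    have "(\<lambda>T. \<Sum>u\<in>UNIV. ((\<Sum>t<T. nstep P t s u) / real T) * e u) \<longlonglongrightarrow> (\<Sum>u\<in>UNIV. Ps s u * e u)"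
      by (intro tendsto_sum tendsto_mult cesf tendsto_const)
    moreover have "\<forall>\<^sub>F T in sequentially. (\<Sum>u\<in>UNIV. ((\<Sum>t<T. nstep P t s u) / real T) * e u) \<le> e s"
    proof (rule eventually_sequentiallyI[of 1])
      fix T :: nat assume T: "1 \<le> T"
      have "(\<Sum>u\<in>UNIV. ((\<Sum>t<T. nstep P t s u) / real T) * e u) = (\<Sum>t<T. \<Sum>u\<in>UNIV. nstep P t s u * e u) / real T"
        by (simp add: sum_divide_distrib sum_distrib_right) (subst sum.swap, simp add: algebra_simps)
      also have "\<dots> \<le> (\<Sum>t<T. e s) / real T"
        by (intro divide_right_mono sum_mono step) simp
      also have "\<dots> = e s" using T by simp
      finally show "(\<Sum>u\<in>UNIV. ((\<Sum>t<T. nstep P t s u) / real T) * e u) \<le> e s" .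
    qed
    ultimately show "(\<Sum>u\<in>UNIV. Ps s u * e u) \<le> e s" by (rule tendsto_upperbound) simp
  qed
  have c9: "\<forall>\<mu>. (\<forall>v. (\<Sum>y\<in>UNIV. \<mu> y * P y v) = \<mu> v) \<longrightarrow> (\<forall>v. (\<Sum>y\<in>UNIV. \<mu> y * Ps y v) = \<mu> v)"
  proof (intro allI impI)
    fix \<mu> v assume inv: "\<forall>v. (\<Sum>y\<in>UNIV. \<mu> y * P y v) = \<mu> v"
    have step: "(\<Sum>y\<in>UNIV. \<mu> y * nstep P t y v) = \<mu> v" for t v
    proof (induction t arbitrary: v)
      case (Suc t)
      have "(\<Sum>y\<in>UNIV. \<mu> y * nstep P (Suc t) y v) = (\<Sum>w\<in>UNIV. (\<Sum>y\<in>UNIV. \<mu> y * nstep P t y w) * P w v)"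
        by (simp add: sum_distrib_left sum_distrib_right mult.assoc) (rule sum.swap)
      also have "\<dots> = \<mu> v" using Suc.IH inv by simp
      finally show ?case .
    qed (simp add: sum_delta_l sum_delta_r)
    have "(\<lambda>T. \<Sum>y\<in>UNIV. \<mu> y * ((\<Sum>t<T. nstep P t y v) / real T)) \<longlonglongrightarrow> (\<Sum>y\<in>UNIV. \<mu> y * Ps y v)"
      by (intro tendsto_sum tendsto_mult cesf tendsto_const)
    moreover have "\<forall>\<^sub>F T in sequentially. (\<Sum>y\<in>UNIV. \<mu> y * ((\<Sum>t<T. nstep P t y v) / real T)) = \<mu> v"
    proof (rule eventually_sequentiallyI[of 1])
      fix T :: nat assume T: "1 \<le> T"
      have "(\<Sum>y\<in>UNIV. \<mu> y * ((\<Sum>t<T. nstep P t y v) / real T)) = (\<Sum>t<T. \<Sum>y\<in>UNIV. \<mu> y * nstep P t y v) / real T"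
        by (simp add: sum_divide_distrib sum_distrib_left) (subst sum.swap, simp add: algebra_simps)
      also have "\<dots> = \<mu> v" using T by (simp add: step)
      finally show "(\<Sum>y\<in>UNIV. \<mu> y * ((\<Sum>t<T. nstep P t y v) / real T)) = \<mu> v" .
    qed
    ultimately show "(\<Sum>y\<in>UNIV. \<mu> y * Ps y v) = \<mu> v" by (rule lim_ev_const)
  qed
  show ?thesis using that c1 c2 c3 c4 c5 c6 c7 c8 c9 by blast
qed




lemma reach_refl: "reach P s s"
  unfolding reach_def by (auto intro!: exI[of _ 0])

lemma reach_step: "P s u > 0 \<Longrightarrow> reach P s u"
  unfolding reach_def by (rule exI[of _ "Suc 0"]) (simp only: nstep_one)

lemma sum_pos_term:
  fixes f :: "'a::finite \<Rightarrow> real"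
  assumes "\<forall>u. 0 \<le> f u" "(\<Sum>u\<in>UNIV. f u) > 0" shows "\<exists>u. f u > 0"
proof (rule ccontr)
  assume "\<not> (\<exists>u. f u > 0)"
  hence "\<forall>u. f u = 0" using assms(1) by (auto intro: order_antisym simp: not_less)
  thus False using assms(2) by simp
qed

lemma reach_trans:
  assumes st: "stochastic P" and "reach P s u" "reach P u t" shows "reach P s t"
proof -
  obtain m n where m: "nstep P m s u > 0" and n: "nstep P n u t > 0" using assms by (auto simp: reach_def)
  have "nstep P m s u * nstep P n u t \<le> (\<Sum>w\<in>UNIV. nstep P m s w * nstep P n w t)"
    by (rule member_le_sum) (auto intro!: mult_nonneg_nonneg nstep_nonneg st)
  also have "\<dots> = nstep P (m + n) s t" by (simp add: nstep_add)
  finally have "nstep P (m + n) s t > 0" using m n by (smt (verit) mult_pos_pos)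
  thus ?thesis by (auto simp: reach_def)
qed

lemma exists_recurrent_reach:
  assumes st: "stochastic P" shows "\<exists>y. reach P s y \<and> recurrent P y"
proof -
  define R where "R x = {t. reach P x t}" for x
  obtain y where y: "reach P s y" and ymin: "\<forall>z. reach P s z \<longrightarrow> card (R y) \<le> card (R z)"
    using ex_has_least_nat[of "reach P s" s "\<lambda>y. card (R y)"] reach_refl by blast
  have "recurrent P y"
    unfolding recurrent_def
  proof (intro allI impI)
    fix t assume yt: "reach P y t"
    have sub: "R t \<subseteq> R y" using reach_trans[OF st yt] by (auto simp: R_def)
    have "card (R y) \<le> card (R t)" using ymin reach_trans[OF st y yt] by blast
    moreover have "card (R t) \<le> card (R y)" using sub by (intro card_mono) auto
    ultimately have "R t = R y" using sub by (intro card_subset_eq) auto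
    thus "reach P t y" using reach_refl[of P y] by (auto simp: R_def)
  qed
  thus ?thesis using y by blast
qed

lemma recurrent_closed:
  assumes st: "stochastic P" and "recurrent P y" "reach P y v" shows "recurrent P v"
  using assms unfolding recurrent_def by (meson reach_trans)

lemma unichain_reach_rec:
  assumes st: "stochastic P" and u: "unichain P" and r: "recurrent P s'" shows "reach P s s'"
proof -
  obtain y where "reach P s y" "recurrent P y" using exists_recurrent_reach[OF st] by blast
  moreover have "reach P y s'" using u r \<open>recurrent P y\<close> by (auto simp: unichain_def)
  ultimately show ?thesis using reach_trans[OF st] by blast
qed

lemma level_prop:
  assumes st: "stochastic P" and lb: "\<forall>u. m \<le> z u"
    and sup: "\<forall>u. z u = m \<longrightarrow> (\<Sum>v\<in>UNIV. P u v * z v) \<le> z u"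
    and x: "z x = m" and r: "reach P x y"
  shows "z y = m"
proof -
  obtain n where n: "nstep P n x y > 0" using r by (auto simp: reach_def)
  have "nstep P n x y > 0 \<Longrightarrow> z y = m" for n y
  proof (induction n arbitrary: y)
    case 0 thus ?case using x by (auto split: if_splits)
  next
    case (Suc n)
    have "\<exists>u. nstep P n x u * P u y > 0"
      using Suc.prems by (intro sum_pos_term) (auto intro!: mult_nonneg_nonneg nstep_nonneg st simp: st[unfolded stochastic_def])
    then obtain u where "nstep P n x u * P u y > 0" by blast
    hence nu: "nstep P n x u > 0" and puy: "P u y > 0"
      using nstep_nonneg[OF st, of n x u] st[unfolded stochastic_def]
      by (metis less_eq_real_def mult_eq_0_iff)+
    have zu: "z u = m" using Suc.IH[OF nu] .
    have "(\<Sum>v\<in>UNIV. P u v * (z v - m)) = (\<Sum>v\<in>UNIV. P u v * z v) - m"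
      using st by (simp add: right_diff_distrib sum_subtractf sum_distrib_right[symmetric] stochastic_def)
    also have "\<dots> \<le> 0" using sup zu by auto
    finally have le0: "(\<Sum>v\<in>UNIV. P u v * (z v - m)) \<le> 0" .
    have nn: "\<forall>v. 0 \<le> P u v * (z v - m)" using lb st by (auto simp: stochastic_def)
    have "P u y * (z y - m) \<le> (\<Sum>v\<in>UNIV. P u v * (z v - m))"
      by (rule member_le_sum) (use nn in auto)
    hence "P u y * (z y - m) \<le> 0" using le0 by linarith
    hence "z y - m \<le> 0" using puy by (simp add: mult_le_0_iff)
    thus ?case using lb by (meson antisym diff_le_0_iff_le)
  qed
  thus ?thesis using n by blast
qed

lemma min_principle:
  fixes z :: "'s::finite \<Rightarrow> real"
  assumes st: "stochastic P" and reach: "\<forall>s. reach P s s'" and z0: "z s' \<ge> 0"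
    and sup: "\<forall>s. s \<noteq> s' \<longrightarrow> (\<Sum>u\<in>UNIV. P s u * z u) \<le> z s"
  shows "z s \<ge> 0"
proof (rule ccontr)
  assume neg: "\<not> z s \<ge> 0"
  define m where "m = Min (range z)"
  have lb: "\<forall>u. m \<le> z u" by (simp add: m_def)
  have "m \<in> range z" unfolding m_def by (rule Min_in) auto
  then obtain x where x: "z x = m" by auto
  have "m < 0" using lb neg by (meson le_less_trans not_le)
  have sup': "\<forall>u. z u = m \<longrightarrow> (\<Sum>v\<in>UNIV. P u v * z v) \<le> z u"
  proof (intro allI impI)
    fix u assume "z u = m"
    hence "u \<noteq> s'" using z0 \<open>m < 0\<close> by auto
    thus "(\<Sum>v\<in>UNIV. P u v * z v) \<le> z u" using sup by blast
  qed
  have "z s' = m" by (rule level_prop[OF st lb sup' x reach[rule_format]])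
  thus False using z0 \<open>m < 0\<close> by simp
qed

lemma harmonic_const:
  fixes v :: "'s::finite \<Rightarrow> real"
  assumes st: "stochastic P" and u: "unichain P" and h: "\<forall>s. (\<Sum>u\<in>UNIV. P s u * v u) = v s"
  shows "v s = v t"
proof -
  define M where "M = Max (range v)"
  define m where "m = Min (range v)"
  have "M \<in> range v" unfolding M_def by (rule Max_in) auto
  then obtain xM where xM: "v xM = M" by auto
  have "m \<in> range v" unfolding m_def by (rule Min_in) auto
  then obtain xm where xm: "v xm = m" by auto
  obtain y1 where y1: "reach P xM y1" "recurrent P y1" using exists_recurrent_reach[OF st] by blast
  obtain y2 where y2: "reach P xm y2" "recurrent P y2" using exists_recurrent_reach[OF st] by blast
  have r12: "reach P xM y2" using reach_trans[OF st y1(1)] y1(2) y2(2) u by (auto simp: unichain_def)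
  have hneg: "\<forall>s. (\<Sum>u\<in>UNIV. P s u * (- v u)) = - v s" using h by (simp add: sum_negf)
  have "(\<lambda>u. - v u) y2 = - M"
    by (rule level_prop[of P "- M" "\<lambda>u. - v u" xM y2]) (use st hneg xM r12 in \<open>auto simp: M_def\<close>)
  moreover have "v y2 = m"
    by (rule level_prop[of P m v xm y2]) (use st h xm y2 in \<open>auto simp: m_def\<close>)
  ultimately have "M = m" by simp
  moreover have "m \<le> v s" "v s \<le> M" "m \<le> v t" "v t \<le> M" by (auto simp: m_def M_def)
  ultimately show ?thesis by linarith
qed




lemma avoid_at: "avoid P s' n s' = 0"
  by (cases n) auto

lemma avoid_bounds: assumes st: "stochastic P" shows "0 \<le> avoid P s' n s \<and> avoid P s' n s \<le> 1"
proof (induction n arbitrary: s)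
  case (Suc n)
  have rs: "(\<Sum>u\<in>UNIV. P s u) = 1" and nn: "\<forall>u. 0 \<le> P s u" using st by (auto simp: stochastic_def)
  have "(\<Sum>u\<in>UNIV. P s u * avoid P s' n u) \<le> (\<Sum>u\<in>UNIV. P s u)"
    by (intro sum_mono) (use Suc.IH nn in \<open>auto intro: mult_left_le\<close>)
  moreover have "0 \<le> (\<Sum>u\<in>UNIV. P s u * avoid P s' n u)"
    by (intro sum_nonneg) (use Suc.IH nn in auto)
  ultimately show ?case using rs by auto
qed simp

lemma avoid_Suc_le: assumes st: "stochastic P" shows "avoid P s' (Suc n) s \<le> avoid P s' n s"
proof (induction n arbitrary: s)
  case 0
  have "(\<Sum>u\<in>UNIV. P s u * avoid P s' 0 u) \<le> (\<Sum>u\<in>UNIV. P s u)"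
    by (intro sum_mono) (use st in \<open>auto simp: stochastic_def\<close>)
  thus ?case using st by (auto simp: stochastic_def)
next
  case (Suc n)
  have "(\<Sum>u\<in>UNIV. P s u * avoid P s' (Suc n) u) \<le> (\<Sum>u\<in>UNIV. P s u * avoid P s' n u)"
    by (intro sum_mono mult_left_mono Suc.IH) (use st in \<open>auto simp: stochastic_def\<close>)
  thus ?case by simp
qed

lemma avoid_mono: assumes st: "stochastic P" and "m \<le> n" shows "avoid P s' n s \<le> avoid P s' m s"
  using lift_Suc_antimono_le[of "\<lambda>n. avoid P s' n s", OF avoid_Suc_le[OF st] assms(2)] .

lemma avoid_nstep: assumes st: "stochastic P" shows "avoid P s' n s + nstep P n s s' \<le> 1"
proof (induction n arbitrary: s)
  case 0 thus ?case by simp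
next
  case (Suc n)
  show ?case
  proof (cases "s = s'")
    case True
    have "nstep P (Suc n) s s' \<le> (\<Sum>t\<in>UNIV. nstep P (Suc n) s t)"
      by (rule member_le_sum) (auto simp del: nstep.simps intro: nstep_nonneg[OF st])
    moreover have "avoid P s' (Suc n) s = 0" using True by (simp only: avoid_at)
    ultimately show ?thesis using True nstep_rowsum[OF st, of "Suc n" s] by linarith
  next
    case False
    have "avoid P s' (Suc n) s + nstep P (Suc n) s s' = (\<Sum>u\<in>UNIV. P s u * (avoid P s' n u + nstep P n u s'))"
      using False by (simp del: nstep.simps add: nstep_first sum.distrib algebra_simps)
    also have "\<dots> \<le> (\<Sum>u\<in>UNIV. P s u)"
      by (intro sum_mono) (use Suc.IH st in \<open>auto simp: stochastic_def intro: mult_left_le\<close>)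
    finally show ?thesis using st by (simp add: stochastic_def)
  qed
qed

lemma avoid_mult:
  assumes st: "stochastic P"
  shows "avoid P s' (m + n) s \<le> avoid P s' m s * Max (range (avoid P s' n))"
proof (induction m arbitrary: s)
  case 0
  show ?case
  proof (cases "s = s'")
    case True thus ?thesis by (simp add: avoid_at)
  next
    case False thus ?thesis by simp
  qed
next
  case (Suc m)
  show ?case
  proof (cases "s = s'")
    case True thus ?thesis by simp
  next
    case False
    have "avoid P s' (Suc m + n) s = (\<Sum>u\<in>UNIV. P s u * avoid P s' (m + n) u)" using False by simp
    also have "\<dots> \<le> (\<Sum>u\<in>UNIV. P s u * (avoid P s' m u * Max (range (avoid P s' n))))"
      by (intro sum_mono mult_left_mono Suc.IH) (use st in \<open>auto simp: stochastic_def\<close>)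
    also have "\<dots> = avoid P s' (Suc m) s * Max (range (avoid P s' n))"
      using False by (simp add: sum_distrib_right mult.assoc)
    finally show ?thesis .
  qed
qed

lemma avoid_geom:
  assumes st: "stochastic P" and reach: "\<forall>s. reach P s s'"
  shows "\<exists>N \<rho>. N > 0 \<and> 0 \<le> \<rho> \<and> \<rho> < 1 \<and> (\<forall>k s. avoid P s' (k * N) s \<le> \<rho> ^ k)"
proof -
  obtain ns where ns: "\<forall>s. nstep P (ns s) s s' > 0" using reach unfolding reach_def by metis
  define N where "N = Suc (Max (range ns))"
  have lt: "avoid P s' N s < 1" for s
  proof -
    have "ns s \<le> N" by (simp add: N_def le_SucI)
    hence "avoid P s' N s \<le> avoid P s' (ns s) s" by (rule avoid_mono[OF st])
    also have "\<dots> < 1" using avoid_nstep[OF st, of s' "ns s" s] ns[rule_format, of s] by linarith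
    finally show ?thesis .
  qed
  define \<rho> where "\<rho> = Max (range (avoid P s' N))"
  have "\<rho> \<in> range (avoid P s' N)" unfolding \<rho>_def by (rule Max_in) auto
  hence \<rho>1: "\<rho> < 1" using lt by auto
  have \<rho>0: "0 \<le> \<rho>" using avoid_bounds[OF st] \<open>\<rho> \<in> range (avoid P s' N)\<close> by auto
  have geo: "avoid P s' (k * N) s \<le> \<rho> ^ k" for k s
  proof (induction k arbitrary: s)
    case 0 thus ?case using avoid_bounds[OF st] by simp
  next
    case (Suc k)
    have mk: "Max (range (avoid P s' (k * N))) \<le> \<rho> ^ k"
      using Suc.IH by (auto intro: Max.boundedI)
    have "avoid P s' (Suc k * N) s = avoid P s' (N + k * N) s" by simp
    also have "\<dots> \<le> avoid P s' N s * Max (range (avoid P s' (k * N)))" by (rule avoid_mult[OF st])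
    also have "\<dots> \<le> \<rho> * \<rho> ^ k"
    proof (intro mult_mono mk)
      show "avoid P s' N s \<le> \<rho>" by (simp add: \<rho>_def)
      show "0 \<le> \<rho>" using \<rho>0 .
      show "0 \<le> Max (range (avoid P s' (k * N)))"
        by (rule order.trans[OF conjunct1[OF avoid_bounds[OF st]] Max_ge]) auto
    qed
    finally show ?case by simp
  qed
  show ?thesis using geo \<rho>0 \<rho>1 by (intro exI[of _ N] exI[of _ \<rho>]) (auto simp: N_def)
qed

lemma avoid_summable:
  assumes st: "stochastic P" and reach: "\<forall>s. reach P s s'"
  shows "summable (\<lambda>n. avoid P s' n s)"
proof -
  obtain N \<rho> where N: "N > 0" and \<rho>: "0 \<le> \<rho>" "\<rho> < 1" and geo: "\<forall>k s. avoid P s' (k * N) s \<le> \<rho> ^ k"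
    using avoid_geom[OF st reach] by blast
  define \<rho>' where "\<rho>' = max \<rho> (1/2)"
  have \<rho>': "0 < \<rho>'" "\<rho>' < 1" "\<rho> \<le> \<rho>'" using \<rho> by (auto simp: \<rho>'_def)
  define \<theta> where "\<theta> = root N \<rho>'"
  have \<theta>N: "\<theta> ^ N = \<rho>'" using \<rho>' N by (simp add: \<theta>_def real_root_pow_pos2)
  have \<theta>0: "0 < \<theta>" using \<rho>' N by (simp add: \<theta>_def)
  have \<theta>1: "\<theta> < 1" using \<rho>' N by (simp add: \<theta>_def)
  have bound: "avoid P s' n s \<le> \<theta> ^ n / \<theta> ^ N" if "n \<ge> N" for n
  proof -
    have "avoid P s' n s \<le> avoid P s' ((n div N) * N) s"
      by (rule avoid_mono[OF st]) simp
    also have "\<dots> \<le> \<rho> ^ (n div N)" using geo by blast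
    also have "\<dots> \<le> \<rho>' ^ (n div N)" by (rule power_mono) (use \<rho> \<rho>' in auto)
    also have "\<dots> = \<theta> ^ (N * (n div N))" by (simp add: power_mult \<theta>N)
    also have "\<dots> \<le> \<theta> ^ (n - N)"
    proof (rule power_decreasing)
      define q where "q = n div N"
      define rr where "rr = n mod N"
      have e: "n = N * q + rr" by (simp add: q_def rr_def)
      have "rr < N" using N by (simp add: rr_def)
      thus "n - N \<le> N * (n div N)" using e unfolding q_def[symmetric] by linarith
    qed (use \<theta>0 \<theta>1 in auto)
    also have "\<dots> = \<theta> ^ n / \<theta> ^ N" using that \<theta>0 by (simp add: power_diff)
    finally show ?thesis .
  qed
  show ?thesis
  proof (rule summable_comparison_test_ev)
    show "\<forall>\<^sub>F n in sequentially. norm (avoid P s' n s) \<le> \<theta> ^ n / \<theta> ^ N"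
      using bound avoid_bounds[OF st] by (auto simp: eventually_sequentially intro!: exI[of _ N])
    show "summable (\<lambda>n. \<theta> ^ n / \<theta> ^ N)"
      by (intro summable_divide summable_geometric) (use \<theta>0 \<theta>1 in auto)
  qed
qed

lemma hit_nonneg: assumes st: "stochastic P" and reach: "\<forall>s. reach P s s'" shows "0 \<le> hit_time P s s'"
  unfolding hit_time_def using avoid_bounds[OF st]
  by (intro suminf_nonneg avoid_summable[OF st reach]) auto

lemma hit_at: "hit_time P s' s' = 0"
  by (simp add: hit_time_def avoid_at)

lemma hit_eq:
  assumes st: "stochastic P" and reach: "\<forall>s. reach P s s'" and ne: "s \<noteq> s'"
  shows "hit_time P s s' = 1 + (\<Sum>u\<in>UNIV. P s u * hit_time P u s')"
proof -
  have sm: "summable (\<lambda>n. avoid P s' n u)" for u by (rule avoid_summable[OF st reach])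
  have "(\<Sum>n. avoid P s' (Suc n) s) = hit_time P s s' - avoid P s' 0 s"
    unfolding hit_time_def by (rule suminf_split_head[OF sm])
  moreover have "(\<Sum>n. avoid P s' (Suc n) s) = (\<Sum>u\<in>UNIV. P s u * hit_time P u s')"
  proof -
    have "(\<Sum>n. avoid P s' (Suc n) s) = (\<Sum>n. \<Sum>u\<in>UNIV. P s u * avoid P s' n u)" using ne by simp
    also have "\<dots> = (\<Sum>u\<in>UNIV. \<Sum>n. P s u * avoid P s' n u)"
      by (rule suminf_sum) (intro summable_mult sm)
    also have "\<dots> = (\<Sum>u\<in>UNIV. P s u * hit_time P u s')"
      by (simp add: hit_time_def suminf_mult[OF sm])
    finally show ?thesis .
  qed
  ultimately show ?thesis using ne by simp
qed

lemma hit_le_diam: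
  assumes "recurrent P s'" shows "hit_time P s s' \<le> diameter P"
proof -
  have "{hit_time P s s' | s s'. recurrent P s'} \<subseteq> (\<lambda>(s, s'). hit_time P s s') ` UNIV" by auto
  hence fin: "finite {hit_time P s s' | s s'. recurrent P s'}" by (rule finite_subset) simp
  show ?thesis unfolding diameter_def by (rule Max_ge[OF fin]) (use assms in blast)
qed




lemma span_shift: "span (\<lambda>s. f s - c) = span (f :: 's::finite \<Rightarrow> real)"
proof -
  have "Max (range (\<lambda>s. f s + (- c))) = Max (range f) + (- c)" by (rule Max_add_commute) auto
  moreover have "Min (range (\<lambda>s. f s + (- c))) = Min (range f) + (- c)" by (rule Min_add_commute) auto
  ultimately show ?thesis by (simp add: span_def)
qed

lemma span_nonneg: "0 \<le> span (f :: 's::finite \<Rightarrow> real)"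
proof -
  have "Min (range f) \<le> f undefined" "f undefined \<le> Max (range f)" by auto
  thus ?thesis by (simp add: span_def)
qed

lemma mnorm_ge: "(\<Sum>s'\<in>UNIV. \<bar>A s s'\<bar>) \<le> mnorm (A :: 's::finite \<Rightarrow> 's \<Rightarrow> real)"
  unfolding mnorm_def by (rule Max_ge) auto

lemma vnorm_ge: "\<bar>v s\<bar> \<le> vnorm (v :: 's::finite \<Rightarrow> real)"
  unfolding vnorm_def by (rule Max_ge) auto

lemma mnorm_nonneg: "0 \<le> mnorm (A :: 's::finite \<Rightarrow> 's \<Rightarrow> real)"
proof -
  have "0 \<le> (\<Sum>s'\<in>UNIV. \<bar>A undefined s'\<bar>)" by (rule sum_nonneg) simp
  thus ?thesis using mnorm_ge[of A undefined] by linarith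
qed

lemma dot_identity:
  fixes \<delta> b :: "'s::finite \<Rightarrow> real"
  assumes "(\<Sum>u\<in>UNIV. \<delta> u) = 0"
  shows "(\<Sum>u\<in>UNIV. \<delta> u * b u) + (\<Sum>u\<in>UNIV. \<bar>\<delta> u\<bar>) / 2 * (Max (range b) - Min (range b))
       = (\<Sum>u\<in>UNIV. (if \<delta> u > 0 then \<delta> u * (b u - Min (range b)) else - \<delta> u * (Max (range b) - b u)))"
proof -
  define bM where "bM = Max (range b)"
  define bm where "bm = Min (range b)"
  have t: "(if \<delta> u > 0 then \<delta> u * (b u - bm) else - \<delta> u * (bM - b u))
      = \<delta> u * b u + \<bar>\<delta> u\<bar> / 2 * (bM - bm) - \<delta> u * ((bM + bm) / 2)" for u
    by (auto simp: abs_if field_simps)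
  have "(\<Sum>u\<in>UNIV. (if \<delta> u > 0 then \<delta> u * (b u - bm) else - \<delta> u * (bM - b u)))
      = (\<Sum>u\<in>UNIV. \<delta> u * b u) + (\<Sum>u\<in>UNIV. \<bar>\<delta> u\<bar>) / 2 * (bM - bm) - (\<Sum>u\<in>UNIV. \<delta> u) * ((bM + bm) / 2)"
    unfolding t by (simp add: sum.distrib sum_subtractf sum_distrib_right sum_divide_distrib)
  thus ?thesis using assms unfolding bM_def bm_def by simp
qed

lemma dot_terms_nonneg:
  fixes \<delta> b :: "'s::finite \<Rightarrow> real"
  shows "0 \<le> (if \<delta> u > 0 then \<delta> u * (b u - Min (range b)) else - \<delta> u * (Max (range b) - b u))"
proof -
  have "Min (range b) \<le> b u" "b u \<le> Max (range b)" by auto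
  show ?thesis
  proof (cases "\<delta> u > 0")
    case False
    have "\<delta> u * (Max (range b) - b u) \<le> 0"
      by (rule mult_nonpos_nonneg) (use False \<open>b u \<le> Max (range b)\<close> in auto)
    thus ?thesis using False by simp
  next
    case True thus ?thesis using \<open>Min (range b) \<le> b u\<close> by simp
  qed
qed

lemma dot_bound:
  fixes \<delta> b :: "'s::finite \<Rightarrow> real"
  assumes "(\<Sum>u\<in>UNIV. \<delta> u) = 0"
  shows "0 \<le> (\<Sum>u\<in>UNIV. \<delta> u * b u) + (\<Sum>u\<in>UNIV. \<bar>\<delta> u\<bar>) / 2 * span b"
  unfolding span_def dot_identity[OF assms] by (intro sum_nonneg dot_terms_nonneg)

lemma dot_tight:
  fixes \<delta> b :: "'s::finite \<Rightarrow> real"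
  assumes "(\<Sum>u\<in>UNIV. \<delta> u) = 0"
    and "(\<Sum>u\<in>UNIV. \<delta> u * b u) + (\<Sum>u\<in>UNIV. \<bar>\<delta> u\<bar>) / 2 * span b = 0"
  shows "\<forall>u. (\<delta> u > 0 \<longrightarrow> b u = Min (range b)) \<and> (\<delta> u < 0 \<longrightarrow> b u = Max (range b))"
proof
  fix u
  have "(\<Sum>u\<in>UNIV. (if \<delta> u > 0 then \<delta> u * (b u - Min (range b)) else - \<delta> u * (Max (range b) - b u))) = 0"
    using assms(2) unfolding span_def dot_identity[OF assms(1)] .
  moreover define T where "T u = (if \<delta> u > 0 then \<delta> u * (b u - Min (range b)) else - \<delta> u * (Max (range b) - b u))" for u
  ultimately have s0: "sum T UNIV = 0" by simp
  have "\<And>u. 0 \<le> T u" unfolding T_def by (rule dot_terms_nonneg)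
  hence "\<forall>u\<in>UNIV. T u = 0" using s0 sum_nonneg_eq_0_iff[of UNIV T] by simp
  hence z: "(if \<delta> u > 0 then \<delta> u * (b u - Min (range b)) else - \<delta> u * (Max (range b) - b u)) = 0"
    unfolding T_def by blast
  show "(\<delta> u > 0 \<longrightarrow> b u = Min (range b)) \<and> (\<delta> u < 0 \<longrightarrow> b u = Max (range b))"
  proof (intro conjI impI)
    assume "\<delta> u > 0" thus "b u = Min (range b)" using z by simp
  next
    assume "\<delta> u < 0" thus "b u = Max (range b)" using z by simp
  qed
qed

lemma support_zero:
  fixes Q :: "'s::finite \<Rightarrow> 's \<Rightarrow> real" and \<mu> h :: "'s \<Rightarrow> real"
  assumes Qnn: "\<forall>y v. 0 \<le> Q y v" and \<mu>nn: "\<forall>y. 0 \<le> \<mu> y"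
    and stat: "\<forall>v. (\<Sum>y\<in>UNIV. \<mu> y * Q y v) = \<mu> v"
    and hnn: "\<forall>v. 0 \<le> h v"
    and dec: "\<forall>y\<in>N. \<mu> y > 0 \<longrightarrow> (\<Sum>v\<in>UNIV. Q y v * h v) = h y - 1"
    and cl: "\<forall>y. y \<notin> N \<longrightarrow> \<mu> y > 0 \<longrightarrow> (\<forall>v\<in>N. Q y v = 0)"
  shows "\<forall>y\<in>N. \<mu> y = 0"
proof -
  have fN: "finite N" "finite (- N)" by auto
  have "(\<Sum>v\<in>N. \<mu> v * h v) = (\<Sum>v\<in>N. \<Sum>y\<in>UNIV. \<mu> y * Q y v * h v)"
    by (intro sum.cong refl) (simp add: sum_distrib_right[symmetric] stat)
  also have "\<dots> = (\<Sum>y\<in>UNIV. \<mu> y * (\<Sum>v\<in>N. Q y v * h v))"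
    by (subst sum.swap) (simp add: sum_distrib_left mult.assoc)
  also have "\<dots> = (\<Sum>y\<in>N. \<mu> y * (\<Sum>v\<in>N. Q y v * h v)) + (\<Sum>y\<in>-N. \<mu> y * (\<Sum>v\<in>N. Q y v * h v))"
    by (subst sum.union_disjoint[symmetric]) (auto simp: Compl_partition)
  also have "(\<Sum>y\<in>-N. \<mu> y * (\<Sum>v\<in>N. Q y v * h v)) = 0"
  proof (intro sum.neutral ballI)
    fix y assume "y \<in> - N"
    show "\<mu> y * (\<Sum>v\<in>N. Q y v * h v) = 0"
    proof (cases "\<mu> y > 0")
      case True thus ?thesis using cl \<open>y \<in> - N\<close> by auto
    next
      case False thus ?thesis using \<mu>nn by (metis less_eq_real_def mult_eq_0_iff)
    qed
  qed
  also have "(\<Sum>y\<in>N. \<mu> y * (\<Sum>v\<in>N. Q y v * h v)) \<le> (\<Sum>y\<in>N. \<mu> y * (h y - 1))"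
  proof (intro sum_mono)
    fix y assume y: "y \<in> N"
    show "\<mu> y * (\<Sum>v\<in>N. Q y v * h v) \<le> \<mu> y * (h y - 1)"
    proof (cases "\<mu> y > 0")
      case True
      have "(\<Sum>v\<in>N. Q y v * h v) \<le> (\<Sum>v\<in>UNIV. Q y v * h v)"
        by (rule sum_mono2) (use Qnn hnn in auto)
      thus ?thesis using dec y True by (auto intro: mult_left_mono)
    next
      case False thus ?thesis using \<mu>nn by (metis less_eq_real_def mult_eq_0_iff order_refl)
    qed
  qed
  finally have "(\<Sum>v\<in>N. \<mu> v * h v) \<le> (\<Sum>y\<in>N. \<mu> y * h y) - (\<Sum>y\<in>N. \<mu> y)"
    by (simp add: right_diff_distrib sum_subtractf)
  hence "(\<Sum>y\<in>N. \<mu> y) \<le> 0" by simp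
  hence "(\<Sum>y\<in>N. \<mu> y) = 0" using sum_nonneg[of N \<mu>] \<mu>nn by auto
  thus ?thesis using sum_nonneg_eq_0_iff[OF fN(1)] \<mu>nn by auto
qed

lemma polP_stoch: "stochastic P0 \<Longrightarrow> stochastic P1 \<Longrightarrow> stochastic (polP P0 P1 \<pi>)"
  by (auto simp: stochastic_def polP_def)




lemma polP_UNIV: "polP P0 P1 UNIV = P1" by (auto simp: polP_def fun_eq_iff)
lemma polr_UNIV: "polr r0 r1 lam UNIV = (\<lambda>s. r1 s - lam)" by (auto simp: polr_def fun_eq_iff)

locale S1 =
  fixes P0 P1 :: "'s::finite \<Rightarrow> 's \<Rightarrow> real" and r0 r1 :: "'s \<Rightarrow> real" and lam g :: real
    and b \<mu>1 :: "'s \<Rightarrow> real"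
  assumes st0: "stochastic P0" and st1: "stochastic P1" and u1: "unichain P1"
    and \<mu>1_nn: "\<forall>u. 0 \<le> \<mu>1 u" and \<mu>1_sum: "(\<Sum>u\<in>UNIV. \<mu>1 u) = 1"
    and \<mu>1_stat: "\<forall>v. (\<Sum>y\<in>UNIV. \<mu>1 y * P1 y v) = \<mu>1 v"
    and \<mu>1_uniq: "\<forall>\<mu>. (\<forall>u. 0 \<le> \<mu> u) \<and> (\<Sum>u\<in>UNIV. \<mu> u) = 1 \<and> (\<forall>v. (\<Sum>y\<in>UNIV. \<mu> y * P1 y v) = \<mu> v)
                   \<longrightarrow> (\<forall>v. \<mu> v = \<mu>1 v)"
    and g_def: "g = (\<Sum>u\<in>UNIV. \<mu>1 u * (r1 u - lam))"
    and gainS: "\<forall>s. gain P1 (\<lambda>s. r1 s - lam) s = g"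
    and b_def: "b = bias P1 (\<lambda>s. r1 s - lam)"
    and b_eq: "\<forall>s. b s - (\<Sum>u\<in>UNIV. P1 s u * b u) = (r1 s - lam) - g"
    and b_\<mu>: "(\<Sum>u\<in>UNIV. \<mu>1 u * b u) = 0"
    and lam_le: "lam \<le> - vnorm (\<lambda>s. r1 s - r0 s) - span r1 * diameter P1 * mnorm (\<lambda>s s'. P1 s s' - P0 s s') / 2"
begin

definition "Mr = Max (range r1) - lam"
definition "mr = Min (range r1) - lam"
definition "c1 = Mr - g"
definition "c2 = g - mr"
definition "bM = Max (range b)"
definition "bm = Min (range b)"
definition "D = diameter P1"
definition "K = span r1 * D"
definition "hh t s = hit_time P1 s t"
definition "\<alpha> s = r1 s - lam - r0 s + (\<Sum>u\<in>UNIV. (P1 s u - P0 s u) * b u)"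

lemma r1_le: "r1 s - lam \<le> Mr" "mr \<le> r1 s - lam"
  by (auto simp: Mr_def mr_def)

lemma b_le: "b s \<le> bM" "bm \<le> b s"
  by (auto simp: bM_def bm_def)

lemma span_b: "span b = bM - bm" by (simp add: span_def bM_def bm_def)

lemma g_bounds: "mr \<le> g" "g \<le> Mr"
proof -
  have "(\<Sum>u\<in>UNIV. \<mu>1 u * mr) \<le> g" unfolding g_def
    by (intro sum_mono mult_left_mono) (auto simp: r1_le \<mu>1_nn)
  thus "mr \<le> g" by (simp add: sum_distrib_right[symmetric] \<mu>1_sum)
  have "g \<le> (\<Sum>u\<in>UNIV. \<mu>1 u * Mr)" unfolding g_def
    by (intro sum_mono mult_left_mono) (auto simp: r1_le \<mu>1_nn)
  thus "g \<le> Mr" by (simp add: sum_distrib_right[symmetric] \<mu>1_sum)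
qed

lemma c_nonneg: "0 \<le> c1" "0 \<le> c2" using g_bounds by (auto simp: c1_def c2_def)

lemma c_sum: "c1 + c2 = span r1" by (simp add: c1_def c2_def Mr_def mr_def span_def)

lemma rec_exists: "\<exists>s'. recurrent P1 s'" using u1 by (simp add: unichain_def)

lemma reach_rec: "recurrent P1 t \<Longrightarrow> \<forall>s. reach P1 s t"
  using unichain_reach_rec[OF st1 u1] by blast

lemma hh_props:
  assumes "recurrent P1 t"
  shows "0 \<le> hh t s" "hh t s \<le> D" "hh t t = 0"
    "s \<noteq> t \<Longrightarrow> hh t s = 1 + (\<Sum>u\<in>UNIV. P1 s u * hh t u)"
  using hit_nonneg[OF st1 reach_rec[OF assms]] hit_le_diam[OF assms] hit_at hit_eq[OF st1 reach_rec[OF assms]]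
  by (auto simp: hh_def D_def)

lemma D_nonneg: "0 \<le> D"
  using rec_exists hh_props(1,2) by (meson order.trans)

lemma K_nonneg: "0 \<le> K" using D_nonneg span_nonneg[of r1] by (simp add: K_def)

lemma P1_sum: "(\<Sum>u\<in>UNIV. P1 s u) = 1" using st1 by (simp add: stochastic_def)
lemma P0_sum: "(\<Sum>u\<in>UNIV. P0 s u) = 1" using st0 by (simp add: stochastic_def)
lemma P1_nn: "0 \<le> P1 s u" using st1 by (simp add: stochastic_def)
lemma P0_nn: "0 \<le> P0 s u" using st0 by (simp add: stochastic_def)

lemma bias_bounds:
  assumes rt: "recurrent P1 t"
  shows "b s - b t \<le> c1 * hh t s" "b t - b s \<le> c2 * hh t s"
proof -
  have Pb: "(\<Sum>u\<in>UNIV. P1 s u * b u) = b s - (r1 s - lam) + g" for s using b_eq[rule_format, of s] by linarith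
  have Pc: "(\<Sum>u\<in>UNIV. P1 s u * c) = c" for s c by (simp add: sum_distrib_right[symmetric] P1_sum)
  have Ph: "(\<Sum>u\<in>UNIV. P1 s u * hh t u) = hh t s - 1" if "s \<noteq> t" for s using hh_props(4)[OF rt that] by simp
  define z where "z s = c1 * hh t s - (b s - b t)" for s
  have "0 \<le> z s"
  proof (rule min_principle[OF st1 reach_rec[OF rt]])
    show "0 \<le> z t" by (simp add: z_def hh_props(3)[OF rt])
    show "\<forall>s. s \<noteq> t \<longrightarrow> (\<Sum>u\<in>UNIV. P1 s u * z u) \<le> z s"
    proof (intro allI impI)
      fix s assume "s \<noteq> t"
      have "(\<Sum>u\<in>UNIV. P1 s u * z u) = (\<Sum>u\<in>UNIV. c1 * (P1 s u * hh t u) - P1 s u * b u + P1 s u * b t)"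
        by (intro sum.cong refl) (simp add: z_def algebra_simps)
      also have "\<dots> = c1 * (\<Sum>u\<in>UNIV. P1 s u * hh t u) - (\<Sum>u\<in>UNIV. P1 s u * b u) + (\<Sum>u\<in>UNIV. P1 s u * b t)"
        by (simp only: sum.distrib sum_subtractf sum_distrib_left)
      also have "\<dots> = z s - (Mr - (r1 s - lam))"
        by (simp only: Ph[OF \<open>s \<noteq> t\<close>] Pb Pc) (simp add: z_def c1_def algebra_simps)
      also have "\<dots> \<le> z s" using r1_le(1)[of s] by simp
      finally show "(\<Sum>u\<in>UNIV. P1 s u * z u) \<le> z s" .
    qed
  qed
  thus "b s - b t \<le> c1 * hh t s" by (simp add: z_def)
  define z' where "z' s = c2 * hh t s + (b s - b t)" for s
  have "0 \<le> z' s"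
  proof (rule min_principle[OF st1 reach_rec[OF rt]])
    show "0 \<le> z' t" by (simp add: z'_def hh_props(3)[OF rt])
    show "\<forall>s. s \<noteq> t \<longrightarrow> (\<Sum>u\<in>UNIV. P1 s u * z' u) \<le> z' s"
    proof (intro allI impI)
      fix s assume "s \<noteq> t"
      have "(\<Sum>u\<in>UNIV. P1 s u * z' u) = (\<Sum>u\<in>UNIV. c2 * (P1 s u * hh t u) + P1 s u * b u - P1 s u * b t)"
        by (intro sum.cong refl) (simp add: z'_def algebra_simps)
      also have "\<dots> = c2 * (\<Sum>u\<in>UNIV. P1 s u * hh t u) + (\<Sum>u\<in>UNIV. P1 s u * b u) - (\<Sum>u\<in>UNIV. P1 s u * b t)"
        by (simp only: sum.distrib sum_subtractf sum_distrib_left)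
      also have "\<dots> = z' s - ((r1 s - lam) - mr)"
        by (simp only: Ph[OF \<open>s \<noteq> t\<close>] Pb Pc) (simp add: z'_def c2_def algebra_simps)
      also have "\<dots> \<le> z' s" using r1_le(2)[of s] by simp
      finally show "(\<Sum>u\<in>UNIV. P1 s u * z' u) \<le> z' s" .
    qed
  qed
  thus "b t - b s \<le> c2 * hh t s" by (simp add: z'_def)
qed

lemma argmax_ex: "\<exists>s. b s = bM"
proof -
  have "bM \<in> range b" unfolding bM_def by (rule Max_in) auto
  thus ?thesis by auto
qed

lemma argmin_ex: "\<exists>s. b s = bm"
proof -
  have "bm \<in> range b" unfolding bm_def by (rule Min_in) auto
  thus ?thesis by auto
qed

lemma span_b_le: "span b \<le> K"
proof -
  obtain t where rt: "recurrent P1 t" using rec_exists by blast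
  obtain s1 where s1: "b s1 = bM" using argmax_ex by blast
  obtain s2 where s2: "b s2 = bm" using argmin_ex by blast
  have "bM - b t \<le> c1 * D"
    using bias_bounds(1)[OF rt, of s1] mult_left_mono[OF hh_props(2)[OF rt, of s1] c_nonneg(1)] s1 by linarith
  moreover have "b t - bm \<le> c2 * D"
    using bias_bounds(2)[OF rt, of s2] mult_left_mono[OF hh_props(2)[OF rt, of s2] c_nonneg(2)] s2 by linarith
  moreover have "K = c1 * D + c2 * D" by (simp add: K_def c_sum[symmetric] algebra_simps)
  ultimately show ?thesis by (simp add: span_b)
qed

definition "\<delta> y u = P1 y u - P0 y u"
definition "AA y = (\<Sum>u\<in>UNIV. \<bar>\<delta> y u\<bar>)"
definition "EE y = (\<Sum>u\<in>UNIV. \<delta> y u * b u) + AA y / 2 * span b"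

lemma \<delta>_sum: "(\<Sum>u\<in>UNIV. \<delta> y u) = 0" by (simp add: \<delta>_def sum_subtractf P1_sum P0_sum)

lemma EE_nonneg: "0 \<le> EE y" unfolding EE_def AA_def by (rule dot_bound[OF \<delta>_sum])

lemma alpha_decomp:
  "\<alpha> y = (r1 y - r0 y + vnorm (\<lambda>s. r1 s - r0 s))
        + (- lam - vnorm (\<lambda>s. r1 s - r0 s) - mnorm (\<lambda>s s'. P1 s s' - P0 s s') * K / 2)
        + (mnorm (\<lambda>s s'. P1 s s' - P0 s s') - AA y) * K / 2
        + AA y * (K - span b) / 2 + EE y"
  by (simp add: \<alpha>_def EE_def \<delta>_def field_simps)

lemma alpha_terms:
  "0 \<le> r1 y - r0 y + vnorm (\<lambda>s. r1 s - r0 s)"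
  "0 \<le> - lam - vnorm (\<lambda>s. r1 s - r0 s) - mnorm (\<lambda>s s'. P1 s s' - P0 s s') * K / 2"
  "0 \<le> (mnorm (\<lambda>s s'. P1 s s' - P0 s s') - AA y) * K / 2"
  "0 \<le> AA y * (K - span b) / 2"
proof -
  show "0 \<le> r1 y - r0 y + vnorm (\<lambda>s. r1 s - r0 s)"
    using vnorm_ge[of "\<lambda>s. r1 s - r0 s" y] by linarith
  show "0 \<le> - lam - vnorm (\<lambda>s. r1 s - r0 s) - mnorm (\<lambda>s s'. P1 s s' - P0 s s') * K / 2"
    using lam_le by (simp add: K_def D_def algebra_simps)
  have "AA y \<le> mnorm (\<lambda>s s'. P1 s s' - P0 s s')"
    using mnorm_ge[of "\<lambda>s s'. P1 s s' - P0 s s'" y] by (simp add: AA_def \<delta>_def)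
  thus "0 \<le> (mnorm (\<lambda>s s'. P1 s s' - P0 s s') - AA y) * K / 2" using K_nonneg by simp
  have "0 \<le> AA y" by (simp add: AA_def sum_nonneg)
  thus "0 \<le> AA y * (K - span b) / 2" using span_b_le by simp
qed

lemma alpha_nonneg: "0 \<le> \<alpha> y"
proof -
  note a = alpha_decomp[of y] alpha_terms(1,3,4)[of y] alpha_terms(2) EE_nonneg[of y]
  show ?thesis using a by linarith
qed

lemma alpha_zero:
  assumes "\<alpha> y = 0"
  shows "EE y = 0" "AA y * (K - span b) = 0"
proof -
  note a = alpha_decomp[of y] alpha_terms(1,3,4)[of y] alpha_terms(2) EE_nonneg[of y]
  show "EE y = 0" using a assms by linarith
  show "AA y * (K - span b) = 0" using a assms by linarith
qed

lemma AA_pos: assumes "P0 y \<noteq> P1 y" shows "0 < AA y"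
proof -
  obtain u where "P0 y u \<noteq> P1 y u" using assms by auto
  hence "0 < \<bar>\<delta> y u\<bar>" by (simp add: \<delta>_def)
  also have "\<bar>\<delta> y u\<bar> \<le> AA y" unfolding AA_def by (rule member_le_sum) auto
  finally show ?thesis .
qed

lemma tight1: assumes "\<alpha> y = 0" "P0 y \<noteq> P1 y" shows "span b = K"
  using alpha_zero(2)[OF assms(1)] AA_pos[OF assms(2)] by simp

lemma tight2: assumes "\<alpha> y = 0"
  shows "\<forall>u. (\<delta> y u > 0 \<longrightarrow> b u = bm) \<and> (\<delta> y u < 0 \<longrightarrow> b u = bM)"
  using dot_tight[OF \<delta>_sum[of y], of b] alpha_zero(1)[OF assms] by (simp add: EE_def AA_def bM_def bm_def)

lemma tight2': assumes "\<alpha> y = 0" shows "(\<Sum>u\<in>UNIV. \<delta> y u * b u) = - AA y / 2 * span b"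
  using alpha_zero(1)[OF assms] by (simp add: EE_def)

lemma tightness:
  assumes K: "span b = K" and rt: "recurrent P1 t"
  shows "bM - b t = c1 * D" "b t - bm = c2 * D"
    "\<And>s. b s = bM \<Longrightarrow> c1 * hh t s = c1 * D" "\<And>s. b s = bm \<Longrightarrow> c2 * hh t s = c2 * D"
proof -
  have le1: "c1 * hh t s \<le> c1 * D" for s by (rule mult_left_mono[OF hh_props(2)[OF rt] c_nonneg(1)])
  have le2: "c2 * hh t s \<le> c2 * D" for s by (rule mult_left_mono[OF hh_props(2)[OF rt] c_nonneg(2)])
  obtain s1 where s1: "b s1 = bM" using argmax_ex by blast
  obtain s2 where s2: "b s2 = bm" using argmin_ex by blast
  have "K = c1 * D + c2 * D" by (simp add: K_def c_sum[symmetric] algebra_simps)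
  hence e: "bM - bm = c1 * D + c2 * D" using K by (simp add: span_b)
  have a1: "bM - b t \<le> c1 * D" using bias_bounds(1)[OF rt, of s1] le1[of s1] s1 by linarith
  have a2: "b t - bm \<le> c2 * D" using bias_bounds(2)[OF rt, of s2] le2[of s2] s2 by linarith
  show "bM - b t = c1 * D" using a1 a2 e by linarith
  show "b t - bm = c2 * D" using a1 a2 e by linarith
  show "c1 * hh t s = c1 * D" if "b s = bM" for s
    using bias_bounds(1)[OF rt, of s] le1[of s] a1 a2 e that by linarith
  show "c2 * hh t s = c2 * D" if "b s = bm" for s
    using bias_bounds(2)[OF rt, of s] le2[of s] a1 a2 e that by linarith
qed

lemma mu1_support: assumes "\<mu>1 u > 0" shows "recurrent P1 u"
proof -
  obtain s' where rs: "recurrent P1 s'" using rec_exists by blast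
  have "\<forall>y\<in>{u. \<not> recurrent P1 u}. \<mu>1 y = 0"
  proof (rule support_zero[where Q = P1 and h = "hh s'"])
    show "\<forall>y v. 0 \<le> P1 y v" by (simp add: P1_nn)
    show "\<forall>y. 0 \<le> \<mu>1 y" by (rule \<mu>1_nn)
    show "\<forall>v. (\<Sum>y\<in>UNIV. \<mu>1 y * P1 y v) = \<mu>1 v" by (rule \<mu>1_stat)
    show "\<forall>v. 0 \<le> hh s' v" using hh_props(1)[OF rs] by blast
    show "\<forall>y\<in>{u. \<not> recurrent P1 u}. 0 < \<mu>1 y \<longrightarrow> (\<Sum>v\<in>UNIV. P1 y v * hh s' v) = hh s' y - 1"
    proof (intro ballI impI)
      fix y assume "y \<in> {u. \<not> recurrent P1 u}"
      hence "y \<noteq> s'" using rs by auto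
      thus "(\<Sum>v\<in>UNIV. P1 y v * hh s' v) = hh s' y - 1" using hh_props(4)[OF rs] by simp
    qed
    show "\<forall>y. y \<notin> {u. \<not> recurrent P1 u} \<longrightarrow> 0 < \<mu>1 y \<longrightarrow> (\<forall>v\<in>{u. \<not> recurrent P1 u}. P1 y v = 0)"
    proof (intro allI impI ballI)
      fix y v assume y: "y \<notin> {u. \<not> recurrent P1 u}" and v: "v \<in> {u. \<not> recurrent P1 u}"
      show "P1 y v = 0"
      proof (rule ccontr)
        assume "P1 y v \<noteq> 0"
        hence "P1 y v > 0" using P1_nn[of y v] by linarith
        hence "recurrent P1 v" using recurrent_closed[OF st1 _ reach_step] y by auto
        thus False using v by auto
      qed
    qed
  qed
  thus ?thesis using assms by auto
qed

end




context S1 begin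

definition "dd \<pi> s = g + b s - polr r0 r1 lam \<pi> s - (\<Sum>u\<in>UNIV. polP P0 P1 \<pi> s u * b u)"

lemma Pb1: "(\<Sum>u\<in>UNIV. P1 s u * b u) = b s - (r1 s - lam) + g"
  using b_eq[rule_format, of s] by linarith

lemma dd_in: "s \<in> \<pi> \<Longrightarrow> dd \<pi> s = 0"
  by (simp add: dd_def polr_def polP_def Pb1)

lemma dd_out: "s \<notin> \<pi> \<Longrightarrow> dd \<pi> s = \<alpha> s"
  by (simp add: dd_def polr_def polP_def \<alpha>_def Pb1 left_diff_distrib sum_subtractf)

lemma dd_nonneg: "0 \<le> dd \<pi> s"
  by (cases "s \<in> \<pi>") (auto simp: dd_in dd_out alpha_nonneg)

lemma stP: "stochastic (polP P0 P1 \<pi>)" by (rule polP_stoch[OF st0 st1])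

lemma key:
  fixes \<pi> :: "'s set" and \<mu> :: "'s \<Rightarrow> real"
  assumes \<mu>nn: "\<forall>u. 0 \<le> \<mu> u" and \<mu>sum: "(\<Sum>u\<in>UNIV. \<mu> u) = 1"
    and \<mu>stat: "\<forall>v. (\<Sum>y\<in>UNIV. \<mu> y * polP P0 P1 \<pi> y v) = \<mu> v"
    and \<mu>d: "\<forall>u. \<mu> u > 0 \<longrightarrow> dd \<pi> u = 0"
    and \<mu>r: "(\<Sum>u\<in>UNIV. \<mu> u * polr r0 r1 lam \<pi> u) = g"
  shows "0 \<le> (\<Sum>u\<in>UNIV. \<mu> u * b u)"
proof -
  define sw where "sw u \<longleftrightarrow> u \<notin> \<pi> \<and> P0 u \<noteq> P1 u" for u
  have alpha0: "\<alpha> u = 0" if "\<mu> u > 0" "u \<notin> \<pi>" for u using \<mu>d dd_out that by auto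
  have nsw_P: "polP P0 P1 \<pi> u = P1 u" if "\<not> sw u" for u using that by (auto simp: sw_def polP_def)
  have caseA: "(\<Sum>u\<in>UNIV. \<mu> u * b u) = 0" if nos: "\<forall>u. \<mu> u > 0 \<longrightarrow> \<not> sw u"
  proof -
    have "(\<Sum>y\<in>UNIV. \<mu> y * P1 y v) = \<mu> v" for v
    proof -
      have "(\<Sum>y\<in>UNIV. \<mu> y * P1 y v) = (\<Sum>y\<in>UNIV. \<mu> y * polP P0 P1 \<pi> y v)"
      proof (intro sum.cong refl)
        fix y show "\<mu> y * P1 y v = \<mu> y * polP P0 P1 \<pi> y v"
        proof (cases "\<mu> y > 0")
          case True thus ?thesis using nos nsw_P by auto
        next
          case False hence "\<mu> y = 0" using \<mu>nn[rule_format, of y] by linarith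
          thus ?thesis by simp
        qed
      qed
      thus ?thesis using \<mu>stat by simp
    qed
    hence "\<forall>v. \<mu> v = \<mu>1 v" using \<mu>1_uniq \<mu>nn \<mu>sum by blast
    thus ?thesis using b_\<mu> by simp
  qed
  show ?thesis
  proof (cases "\<forall>u. \<mu> u > 0 \<longrightarrow> \<not> sw u")
    case True thus ?thesis using caseA by simp
  next
    case False
    then obtain x where x\<mu>: "\<mu> x > 0" and xsw: "sw x" by blast
    have xn: "x \<notin> \<pi>" and xP: "P0 x \<noteq> P1 x" using xsw by (auto simp: sw_def)
    have ax: "\<alpha> x = 0" using alpha0[OF x\<mu> xn] .
    show ?thesis
    proof (cases "span b = 0")
      case True
      hence "bM = bm" by (simp add: span_b)
      hence bc: "b u = bm" for u using b_le[of u] by linarith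
      have "(\<Sum>u\<in>UNIV. \<mu>1 u * b u) = bm" by (simp add: bc sum_distrib_right[symmetric] \<mu>1_sum)
      hence "bm = 0" using b_\<mu> by simp
      thus ?thesis by (simp add: bc)
    next
      case False
      have spK: "span b = K" by (rule tight1[OF ax xP])
      have Kpos: "K > 0" using False spK span_nonneg[of b] by linarith
      have signs: "(\<delta> y u > 0 \<longrightarrow> b u = bm) \<and> (\<delta> y u < 0 \<longrightarrow> b u = bM)" if "\<mu> y > 0" "y \<notin> \<pi>" for y u
        using tight2[OF alpha0[OF that]] by blast
      obtain s' where rs: "recurrent P1 s'" using rec_exists by blast
      show ?thesis
      proof (cases "c2 = 0")
        case True
        have brec: "b t = bm" if "recurrent P1 t" for t using tightness(2)[OF spK that] True by simp
        have "(\<Sum>u\<in>UNIV. \<mu>1 u * b u) = (\<Sum>u\<in>UNIV. \<mu>1 u * bm)"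
        proof (intro sum.cong refl)
          fix u show "\<mu>1 u * b u = \<mu>1 u * bm"
          proof (cases "\<mu>1 u > 0")
            case True thus ?thesis using brec mu1_support by auto
          next
            case False hence "\<mu>1 u = 0" using \<mu>1_nn[rule_format, of u] by linarith
            thus ?thesis by simp
          qed
        qed
        hence "bm = 0" using b_\<mu> by (simp add: sum_distrib_right[symmetric] \<mu>1_sum)
        hence "\<forall>u. 0 \<le> b u" using b_le by simp
        thus ?thesis using \<mu>nn by (auto intro!: sum_nonneg)
      next
        case c2ne: False
        show ?thesis
        proof (cases "c1 = 0")
          case True
          have rle: "polr r0 r1 lam \<pi> u \<le> g" if "\<mu> u > 0" for u
          proof (cases "u \<in> \<pi>")
            case True thus ?thesis using r1_le(1)[of u] \<open>c1 = 0\<close> by (simp add: polr_def c1_def)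
          next
            case False
            have "r0 u = r1 u - lam + (\<Sum>v\<in>UNIV. \<delta> u v * b v)"
              using alpha0[OF that False] by (simp add: \<alpha>_def \<delta>_def)
            moreover have "(\<Sum>v\<in>UNIV. \<delta> u v * b v) \<le> 0"
              using tight2'[OF alpha0[OF that False]] span_nonneg[of b] AA_def
              by (simp add: AA_def sum_nonneg mult_nonneg_nonneg)
            ultimately show ?thesis using False r1_le(1)[of u] \<open>c1 = 0\<close> by (simp add: polr_def c1_def)
          qed
          have rlt: "polr r0 r1 lam \<pi> x < g"
          proof -
            have "r0 x = r1 x - lam + (\<Sum>v\<in>UNIV. \<delta> x v * b v)"
              using ax by (simp add: \<alpha>_def \<delta>_def)
            moreover have "(\<Sum>v\<in>UNIV. \<delta> x v * b v) < 0"
              using tight2'[OF ax] AA_pos[OF xP] False span_nonneg[of b] by simp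
            ultimately show ?thesis using xn r1_le(1)[of x] \<open>c1 = 0\<close> by (simp add: polr_def c1_def)
          qed
          have nn: "0 \<le> \<mu> u * (g - polr r0 r1 lam \<pi> u)" for u
          proof (cases "\<mu> u > 0")
            case True thus ?thesis using rle[OF True] by simp
          next
            case False hence "\<mu> u = 0" using \<mu>nn[rule_format, of u] by linarith
            thus ?thesis by simp
          qed
          have "0 < \<mu> x * (g - polr r0 r1 lam \<pi> x)" using x\<mu> rlt by simp
          also have "\<dots> \<le> (\<Sum>u\<in>UNIV. \<mu> u * (g - polr r0 r1 lam \<pi> u))"
            by (rule member_le_sum) (use nn in auto)
          also have "\<dots> = g * (\<Sum>u\<in>UNIV. \<mu> u) - (\<Sum>u\<in>UNIV. \<mu> u * polr r0 r1 lam \<pi> u)"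
            by (simp add: right_diff_distrib sum_subtractf sum_distrib_left mult.commute)
          also have "\<dots> = 0" using \<mu>sum \<mu>r by simp
          finally show ?thesis by simp
        next
          case c1ne: False
          have c1p: "c1 > 0" and c2p: "c2 > 0" using c1ne c2ne c_nonneg by auto
          have Dpos: "D > 0" using Kpos D_nonneg span_nonneg[of r1] by (auto simp: K_def intro: ccontr)
          have hM: "hh s' s = D" if "b s = bM" for s using tightness(3)[OF spK rs that] c1p by simp
          have hm: "hh s' s = D" if "b s = bm" for s using tightness(4)[OF spK rs that] c2p by simp
          have argmin_nrec: "\<not> recurrent P1 u" if "b u = bm" for u
          proof
            assume "recurrent P1 u"
            from tightness(2)[OF spK this] that have "c2 * D = 0" by simp
            thus False using c2p Dpos by simp
          qed
          have sw_pos: "\<exists>u. \<delta> y u > 0 \<and> b u = bm \<and> P1 y u > 0" if "\<mu> y > 0" "sw y" for y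
          proof -
            have yn: "y \<notin> \<pi>" and yP: "P0 y \<noteq> P1 y" using that(2) by (auto simp: sw_def)
            have "\<exists>u. \<delta> y u > 0"
            proof (rule ccontr)
              assume "\<not> (\<exists>u. \<delta> y u > 0)"
              hence le: "\<forall>u. \<delta> y u \<le> 0" by (simp add: not_less)
              hence "\<forall>u. - \<delta> y u = 0"
                using sum_nonneg_eq_0_iff[of UNIV "\<lambda>u. - \<delta> y u"] \<delta>_sum[of y] by (simp add: sum_negf)
              hence "P0 y = P1 y" by (auto simp: \<delta>_def fun_eq_iff)
              thus False using yP by simp
            qed
            then obtain u where "\<delta> y u > 0" by blast
            moreover have "b u = bm" using signs[OF that(1) yn] \<open>\<delta> y u > 0\<close> by blast
            moreover have "P1 y u > 0" using \<open>\<delta> y u > 0\<close> P0_nn[of y u] by (simp add: \<delta>_def)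
            ultimately show ?thesis by blast
          qed
          have rec_nsw: "\<not> sw y" if y\<mu>: "\<mu> y > 0" and yr: "recurrent P1 y" for y
          proof
            assume ysw: "sw y"
            obtain u where "b u = bm" "P1 y u > 0" using sw_pos[OF y\<mu> ysw] by blast
            hence "recurrent P1 u" using recurrent_closed[OF st1 yr reach_step] by blast
            thus False using argmin_nrec \<open>b u = bm\<close> by blast
          qed
          have "\<forall>y\<in>{u. \<not> recurrent P1 u}. \<mu> y = 0"
          proof (rule support_zero[where Q = "polP P0 P1 \<pi>" and h = "hh s'"])
            show "\<forall>y v. 0 \<le> polP P0 P1 \<pi> y v" using stP by (simp add: stochastic_def)
            show "\<forall>y. 0 \<le> \<mu> y" by (rule \<mu>nn)
            show "\<forall>v. (\<Sum>y\<in>UNIV. \<mu> y * polP P0 P1 \<pi> y v) = \<mu> v" by (rule \<mu>stat)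
            show "\<forall>v. 0 \<le> hh s' v" using hh_props(1)[OF rs] by blast
            show "\<forall>y\<in>{u. \<not> recurrent P1 u}. 0 < \<mu> y \<longrightarrow> (\<Sum>v\<in>UNIV. polP P0 P1 \<pi> y v * hh s' v) = hh s' y - 1"
            proof (intro ballI impI)
              fix y assume yN: "y \<in> {u. \<not> recurrent P1 u}" and y\<mu>: "0 < \<mu> y"
              have ys: "y \<noteq> s'" using rs yN by auto
              have P1h: "(\<Sum>v\<in>UNIV. P1 y v * hh s' v) = hh s' y - 1" using hh_props(4)[OF rs ys] by simp
              show "(\<Sum>v\<in>UNIV. polP P0 P1 \<pi> y v * hh s' v) = hh s' y - 1"
              proof (cases "sw y")
                case False thus ?thesis using nsw_P P1h by simp
              next
                case True
                hence yn: "y \<notin> \<pi>" by (simp add: sw_def)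
                have dh: "(\<Sum>v\<in>UNIV. \<delta> y v * hh s' v) = (\<Sum>v\<in>UNIV. \<delta> y v * D)"
                proof (intro sum.cong refl)
                  fix v show "\<delta> y v * hh s' v = \<delta> y v * D"
                    using signs[OF y\<mu> yn, of v] hM hm by (cases "\<delta> y v > 0"; cases "\<delta> y v < 0") auto
                qed
                also have "\<dots> = 0" by (simp add: sum_distrib_right[symmetric] \<delta>_sum)
                finally have "(\<Sum>v\<in>UNIV. \<delta> y v * hh s' v) = 0" .
                hence "(\<Sum>v\<in>UNIV. P0 y v * hh s' v) = (\<Sum>v\<in>UNIV. P1 y v * hh s' v)"
                  by (simp add: \<delta>_def left_diff_distrib sum_subtractf)
                thus ?thesis using yn P1h by (simp add: polP_def)
              qed
            qed
            show "\<forall>y. y \<notin> {u. \<not> recurrent P1 u} \<longrightarrow> 0 < \<mu> y \<longrightarrow> (\<forall>v\<in>{u. \<not> recurrent P1 u}. polP P0 P1 \<pi> y v = 0)"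
            proof (intro allI impI ballI)
              fix y v assume y: "y \<notin> {u. \<not> recurrent P1 u}" and y\<mu>: "0 < \<mu> y" and v: "v \<in> {u. \<not> recurrent P1 u}"
              have yr: "recurrent P1 y" using y by simp
              have "polP P0 P1 \<pi> y v = P1 y v" using nsw_P[OF rec_nsw[OF y\<mu> yr]] by simp
              moreover have "P1 y v = 0"
              proof (rule ccontr)
                assume "P1 y v \<noteq> 0"
                hence "P1 y v > 0" using P1_nn[of y v] by linarith
                hence "recurrent P1 v" using recurrent_closed[OF st1 yr reach_step] by blast
                thus False using v by simp
              qed
              ultimately show "polP P0 P1 \<pi> y v = 0" by simp
            qed
          qed
          hence "recurrent P1 x" using x\<mu> by auto
          hence "\<not> sw x" using rec_nsw[OF x\<mu>] by blast
          thus ?thesis using xsw by simp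
        qed
      qed
    qed
  qed
qed

end




context S1 begin

lemma pol_main:
  fixes \<pi> :: "'s set"
  shows "(\<forall>s. gain (polP P0 P1 \<pi>) (polr r0 r1 lam \<pi>) s \<le> g) \<and>
         ((\<forall>s. g \<le> gain (polP P0 P1 \<pi>) (polr r0 r1 lam \<pi>) s) \<longrightarrow>
            (\<forall>s. bias (polP P0 P1 \<pi>) (polr r0 r1 lam \<pi>) s \<le> b s))"
proof -
  define Q where "Q = polP P0 P1 \<pi>"
  define r where "r = polr r0 r1 lam \<pi>"
  obtain Ps where c1: "\<forall>s u. 0 \<le> Ps s u" and c2: "\<forall>s. (\<Sum>u\<in>UNIV. Ps s u) = 1"
    and c3: "\<forall>s v. (\<Sum>u\<in>UNIV. Ps s u * Q u v) = Ps s v"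
    and c4: "\<forall>s v. (\<Sum>u\<in>UNIV. Q s u * Ps u v) = Ps s v"
    and c5: "\<forall>r s. gain Q r s = (\<Sum>u\<in>UNIV. Ps s u * r u)"
    and c6: "\<forall>r s. (\<Sum>u\<in>UNIV. Ps s u * bias Q r u) = 0"
    and c7: "\<forall>r s. bias Q r s - (\<Sum>u\<in>UNIV. Q s u * bias Q r u) = r s - (\<Sum>u\<in>UNIV. Ps s u * r u)"
    and c8: "\<forall>e. (\<forall>s. (\<Sum>u\<in>UNIV. Q s u * e u) \<le> e s) \<longrightarrow> (\<forall>s. (\<Sum>u\<in>UNIV. Ps s u * e u) \<le> e s)"
    and c9: "\<forall>\<mu>. (\<forall>v. (\<Sum>y\<in>UNIV. \<mu> y * Q y v) = \<mu> v) \<longrightarrow> (\<forall>v. (\<Sum>y\<in>UNIV. \<mu> y * Ps y v) = \<mu> v)"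
    unfolding Q_def by (rule bridge[OF stP[of \<pi>]])
  have rform: "r u = g + b u - (\<Sum>v\<in>UNIV. Q u v * b v) - dd \<pi> u" for u
    by (simp add: dd_def Q_def r_def)
  have swp: "(\<Sum>u\<in>UNIV. Ps s u * (\<Sum>v\<in>UNIV. Q u v * b v)) = (\<Sum>v\<in>UNIV. Ps s v * b v)" for s
  proof -
    have "(\<Sum>u\<in>UNIV. Ps s u * (\<Sum>v\<in>UNIV. Q u v * b v)) = (\<Sum>v\<in>UNIV. (\<Sum>u\<in>UNIV. Ps s u * Q u v) * b v)"
      by (simp add: sum_distrib_left sum_distrib_right mult.assoc) (rule sum.swap)
    thus ?thesis using c3 by simp
  qed
  have gform: "gain Q r s = g - (\<Sum>u\<in>UNIV. Ps s u * dd \<pi> u)" for s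
  proof -
    have "gain Q r s = (\<Sum>u\<in>UNIV. Ps s u * g + Ps s u * b u - Ps s u * (\<Sum>v\<in>UNIV. Q u v * b v) - Ps s u * dd \<pi> u)"
      using c5 by (simp add: rform algebra_simps)
    also have "\<dots> = g * (\<Sum>u\<in>UNIV. Ps s u) + (\<Sum>u\<in>UNIV. Ps s u * b u) - (\<Sum>u\<in>UNIV. Ps s u * (\<Sum>v\<in>UNIV. Q u v * b v)) - (\<Sum>u\<in>UNIV. Ps s u * dd \<pi> u)"
      by (simp only: sum.distrib sum_subtractf sum_distrib_left mult.commute)
    also have "\<dots> = g - (\<Sum>u\<in>UNIV. Ps s u * dd \<pi> u)" using c2 swp by simp
    finally show ?thesis .
  qed
  have dnn: "0 \<le> (\<Sum>u\<in>UNIV. Ps s u * dd \<pi> u)" for s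
    using c1 dd_nonneg by (auto intro!: sum_nonneg)
  have part1: "\<forall>s. gain Q r s \<le> g" using gform dnn by (simp add: gform)
  have part2: "\<forall>s. bias Q r s \<le> b s" if ge: "\<forall>s. g \<le> gain Q r s"
  proof
    fix s
    have sum0: "(\<Sum>u\<in>UNIV. Ps s u * dd \<pi> u) = 0" using ge[rule_format, of s] gform[of s] dnn[of s] by linarith
    have z: "\<forall>u\<in>UNIV. Ps s u * dd \<pi> u = 0"
      using sum_nonneg_eq_0_iff[of UNIV "\<lambda>u. Ps s u * dd \<pi> u"] sum0 c1 dd_nonneg by auto
    have \<mu>d: "\<forall>u. Ps s u > 0 \<longrightarrow> dd \<pi> u = 0"
    proof (intro allI impI)
      fix u assume pu: "0 < Ps s u"
      have "Ps s u * dd \<pi> u = 0" using z by blast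
      thus "dd \<pi> u = 0" using pu by simp
    qed
    have gg: "gain Q r s' = g" for s' using ge[rule_format, of s'] gform[of s'] dnn[of s'] by linarith
    have \<mu>r: "(\<Sum>u\<in>UNIV. Ps s u * r u) = g" using gg c5 by simp
    have kb: "0 \<le> (\<Sum>u\<in>UNIV. Ps s u * b u)"
      by (rule key[of "Ps s" \<pi>]) (use c1 c2 c3 \<mu>d \<mu>r in \<open>auto simp: Q_def r_def\<close>)
    define h' where "h' = bias Q r"
    have h'eq: "h' u - (\<Sum>v\<in>UNIV. Q u v * h' v) = r u - g" for u
      using c7 gg c5 by (simp add: h'_def)
    have h'0: "(\<Sum>u\<in>UNIV. Ps s u * h' u) = 0" using c6 by (simp add: h'_def)
    define e where "e u = b u - h' u" for u
    have "(\<Sum>v\<in>UNIV. Q u v * e v) \<le> e u" for u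
    proof -
      have "(\<Sum>v\<in>UNIV. Q u v * e v) = (\<Sum>v\<in>UNIV. Q u v * b v) - (\<Sum>v\<in>UNIV. Q u v * h' v)"
        by (simp add: e_def right_diff_distrib sum_subtractf)
      also have "\<dots> = e u - dd \<pi> u" using h'eq[of u] rform[of u] by (simp add: e_def)
      finally show ?thesis using dd_nonneg[of \<pi> u] by simp
    qed
    hence "(\<Sum>u\<in>UNIV. Ps s u * e u) \<le> e s" using c8 by blast
    moreover have "(\<Sum>u\<in>UNIV. Ps s u * e u) = (\<Sum>u\<in>UNIV. Ps s u * b u)"
      using h'0 by (simp add: e_def right_diff_distrib sum_subtractf)
    ultimately show "bias Q r s \<le> b s" using kb by (simp add: e_def h'_def)
  qed
  show ?thesis using part1 part2 by (simp add: Q_def r_def)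
qed

lemma result: "bias_opt P0 P1 r0 r1 lam UNIV"
proof -
  have A: "gain_opt P0 P1 r0 r1 lam UNIV"
    unfolding gain_opt_def
  proof (intro allI)
    fix \<pi>' s
    show "gain (polP P0 P1 \<pi>') (polr r0 r1 lam \<pi>') s \<le> gain (polP P0 P1 UNIV) (polr r0 r1 lam UNIV) s"
      using pol_main[of \<pi>'] gainS by (simp add: polP_UNIV polr_UNIV)
  qed
  have B: "\<forall>s. bias (polP P0 P1 \<pi>') (polr r0 r1 lam \<pi>') s \<le> bias (polP P0 P1 UNIV) (polr r0 r1 lam UNIV) s"
    if go: "gain_opt P0 P1 r0 r1 lam \<pi>'" for \<pi>'
  proof -
    have "\<forall>s. gain (polP P0 P1 UNIV) (polr r0 r1 lam UNIV) s \<le> gain (polP P0 P1 \<pi>') (polr r0 r1 lam \<pi>') s"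
      using go unfolding gain_opt_def by blast
    hence "\<forall>s. g \<le> gain (polP P0 P1 \<pi>') (polr r0 r1 lam \<pi>') s"
      unfolding polP_UNIV polr_UNIV using gainS by simp
    hence "\<forall>s. bias (polP P0 P1 \<pi>') (polr r0 r1 lam \<pi>') s \<le> b s" using pol_main[of \<pi>'] by blast
    thus ?thesis by (simp add: polP_UNIV polr_UNIV b_def)
  qed
  show ?thesis unfolding bias_opt_def using A B by blast
qed

end

lemma part1:
  fixes P0 P1 :: "'s::finite \<Rightarrow> 's \<Rightarrow> real" and r0 r1 :: "'s \<Rightarrow> real"
  assumes st0: "stochastic P0" and st1: "stochastic P1" and u1: "unichain P1"
    and lam: "lam \<le> - vnorm (\<lambda>s. r1 s - r0 s) - span r1 * diameter P1 * mnorm (\<lambda>s s'. P1 s s' - P0 s s') / 2"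
  shows "bias_opt P0 P1 r0 r1 lam UNIV"
proof -
  obtain Ps where c1: "\<forall>s u. 0 \<le> Ps s u" and c2: "\<forall>s. (\<Sum>u\<in>UNIV. Ps s u) = 1"
    and c3: "\<forall>s v. (\<Sum>u\<in>UNIV. Ps s u * P1 u v) = Ps s v"
    and c4: "\<forall>s v. (\<Sum>u\<in>UNIV. P1 s u * Ps u v) = Ps s v"
    and c5: "\<forall>r s. gain P1 r s = (\<Sum>u\<in>UNIV. Ps s u * r u)"
    and c6: "\<forall>r s. (\<Sum>u\<in>UNIV. Ps s u * bias P1 r u) = 0"
    and c7: "\<forall>r s. bias P1 r s - (\<Sum>u\<in>UNIV. P1 s u * bias P1 r u) = r s - (\<Sum>u\<in>UNIV. Ps s u * r u)"
    and c8: "\<forall>e. (\<forall>s. (\<Sum>u\<in>UNIV. P1 s u * e u) \<le> e s) \<longrightarrow> (\<forall>s. (\<Sum>u\<in>UNIV. Ps s u * e u) \<le> e s)"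
    and c9: "\<forall>\<mu>. (\<forall>v. (\<Sum>y\<in>UNIV. \<mu> y * P1 y v) = \<mu> v) \<longrightarrow> (\<forall>v. (\<Sum>y\<in>UNIV. \<mu> y * Ps y v) = \<mu> v)"
    by (rule bridge[OF st1])
  have rows: "Ps s v = Ps t v" for s t v
    using harmonic_const[OF st1 u1, of "\<lambda>u. Ps u v" s t] c4 by blast
  define \<mu>1 where "\<mu>1 v = Ps undefined v" for v
  have Ps\<mu>: "Ps s v = \<mu>1 v" for s v using rows by (simp add: \<mu>1_def)
  define g where "g = (\<Sum>u\<in>UNIV. \<mu>1 u * (r1 u - lam))"
  show ?thesis
  proof (rule S1.result)
    show "S1 P0 P1 r0 r1 lam g (bias P1 (\<lambda>s. r1 s - lam)) \<mu>1"
    proof (unfold_locales)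
      show "stochastic P0" "stochastic P1" "unichain P1" by (fact st0 st1 u1)+
      show "\<forall>u. 0 \<le> \<mu>1 u" using c1 by (simp add: \<mu>1_def)
      show "(\<Sum>u\<in>UNIV. \<mu>1 u) = 1" using c2 by (simp add: \<mu>1_def)
      show "\<forall>v. (\<Sum>y\<in>UNIV. \<mu>1 y * P1 y v) = \<mu>1 v" using c3 by (simp add: \<mu>1_def)
      show "\<forall>\<mu>. (\<forall>u. 0 \<le> \<mu> u) \<and> (\<Sum>u\<in>UNIV. \<mu> u) = 1 \<and> (\<forall>v. (\<Sum>y\<in>UNIV. \<mu> y * P1 y v) = \<mu> v)
                   \<longrightarrow> (\<forall>v. \<mu> v = \<mu>1 v)"
      proof (intro allI impI)
        fix \<mu> v assume a: "(\<forall>u. 0 \<le> \<mu> u) \<and> (\<Sum>u\<in>UNIV. \<mu> u) = 1 \<and> (\<forall>v. (\<Sum>y\<in>UNIV. \<mu> y * P1 y v) = \<mu> v)"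
        hence "(\<Sum>y\<in>UNIV. \<mu> y * Ps y v) = \<mu> v" using c9 by blast
        moreover have "(\<Sum>y\<in>UNIV. \<mu> y * Ps y v) = \<mu>1 v"
          using a by (simp add: Ps\<mu> sum_distrib_right[symmetric])
        ultimately show "\<mu> v = \<mu>1 v" by simp
      qed
      show "g = (\<Sum>u\<in>UNIV. \<mu>1 u * (r1 u - lam))" by (simp add: g_def)
      show "\<forall>s. gain P1 (\<lambda>s. r1 s - lam) s = g" using c5 by (simp add: Ps\<mu> g_def)
      show "bias P1 (\<lambda>s. r1 s - lam) = bias P1 (\<lambda>s. r1 s - lam)" ..
      show "\<forall>s. bias P1 (\<lambda>s. r1 s - lam) s - (\<Sum>u\<in>UNIV. P1 s u * bias P1 (\<lambda>s. r1 s - lam) u) = r1 s - lam - g"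
        using c7 by (simp add: Ps\<mu> g_def)
      show "(\<Sum>u\<in>UNIV. \<mu>1 u * bias P1 (\<lambda>s. r1 s - lam) u) = 0" using c6 by (simp add: \<mu>1_def)
      show "lam \<le> - vnorm (\<lambda>s. r1 s - r0 s) - span r1 * diameter P1 * mnorm (\<lambda>s s'. P1 s s' - P0 s s') / 2"
        by (rule lam)
    qed
  qed
qed




lemma gain_shift:
  assumes st: "stochastic Q" shows "gain Q (\<lambda>s. r s + c) s = gain Q r s + c"
proof -
  obtain Ps where c1: "\<forall>s u. 0 \<le> Ps s u" and c2: "\<forall>s. (\<Sum>u\<in>UNIV. Ps s u) = 1"
    and c3: "\<forall>s v. (\<Sum>u\<in>UNIV. Ps s u * Q u v) = Ps s v"
    and c4: "\<forall>s v. (\<Sum>u\<in>UNIV. Q s u * Ps u v) = Ps s v"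
    and c5: "\<forall>r s. gain Q r s = (\<Sum>u\<in>UNIV. Ps s u * r u)"
    and c6: "\<forall>r s. (\<Sum>u\<in>UNIV. Ps s u * bias Q r u) = 0"
    and c7: "\<forall>r s. bias Q r s - (\<Sum>u\<in>UNIV. Q s u * bias Q r u) = r s - (\<Sum>u\<in>UNIV. Ps s u * r u)"
    and c8: "\<forall>e. (\<forall>s. (\<Sum>u\<in>UNIV. Q s u * e u) \<le> e s) \<longrightarrow> (\<forall>s. (\<Sum>u\<in>UNIV. Ps s u * e u) \<le> e s)"
    and c9: "\<forall>\<mu>. (\<forall>v. (\<Sum>y\<in>UNIV. \<mu> y * Q y v) = \<mu> v) \<longrightarrow> (\<forall>v. (\<Sum>y\<in>UNIV. \<mu> y * Ps y v) = \<mu> v)"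
    by (rule bridge[OF st])
  have "(\<Sum>u\<in>UNIV. Ps s u * (r u + c)) = (\<Sum>u\<in>UNIV. Ps s u * r u) + (\<Sum>u\<in>UNIV. Ps s u) * c"
    by (simp add: distrib_left sum.distrib sum_distrib_right)
  thus ?thesis using c2 c5 by simp
qed

lemma exp_rew_shift:
  assumes st: "stochastic Q" shows "exp_rew Q (\<lambda>s. r s + c) t s = exp_rew Q r t s + c"
  using nstep_rowsum[OF st, of t s]
  by (simp add: exp_rew_def distrib_left sum.distrib sum_distrib_right[symmetric])

lemma bias_shift:
  assumes st: "stochastic Q" shows "bias Q (\<lambda>s. r s + c) = bias Q r"
  unfolding bias_def by (simp add: exp_rew_shift[OF st] gain_shift[OF st])

lemma polP_swap: "polP P1 P0 \<pi> = polP P0 P1 (- \<pi>)"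
  by (auto simp: polP_def fun_eq_iff)

lemma polr_swap: "polr r1 r0 (- lam) \<pi> = (\<lambda>s. polr r0 r1 lam (- \<pi>) s + lam)"
  by (auto simp: polr_def fun_eq_iff)

lemma swap_opt:
  assumes st0: "stochastic P0" and st1: "stochastic P1"
  shows "bias_opt P1 P0 r1 r0 (- lam) \<pi> = bias_opt P0 P1 r0 r1 lam (- \<pi>)"
proof -
  have G: "gain (polP P1 P0 \<sigma>) (polr r1 r0 (- lam) \<sigma>) s = gain (polP P0 P1 (- \<sigma>)) (polr r0 r1 lam (- \<sigma>)) s + lam"
    for \<sigma> s unfolding polP_swap[of P1 P0] polr_swap[of r1 r0 lam] by (rule gain_shift[OF polP_stoch[OF st0 st1]])
  have B: "bias (polP P1 P0 \<sigma>) (polr r1 r0 (- lam) \<sigma>) = bias (polP P0 P1 (- \<sigma>)) (polr r0 r1 lam (- \<sigma>))"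
    for \<sigma> unfolding polP_swap[of P1 P0] polr_swap[of r1 r0 lam] by (rule bias_shift[OF polP_stoch[OF st0 st1]])
  have GO: "gain_opt P1 P0 r1 r0 (- lam) \<sigma> = gain_opt P0 P1 r0 r1 lam (- \<sigma>)" for \<sigma>
  proof
    assume a: "gain_opt P1 P0 r1 r0 (- lam) \<sigma>"
    show "gain_opt P0 P1 r0 r1 lam (- \<sigma>)"
      unfolding gain_opt_def
    proof (intro allI)
      fix \<pi>' s
      have "gain (polP P1 P0 (- \<pi>')) (polr r1 r0 (- lam) (- \<pi>')) s \<le> gain (polP P1 P0 \<sigma>) (polr r1 r0 (- lam) \<sigma>) s"
        using a unfolding gain_opt_def by blast
      thus "gain (polP P0 P1 \<pi>') (polr r0 r1 lam \<pi>') s \<le> gain (polP P0 P1 (- \<sigma>)) (polr r0 r1 lam (- \<sigma>)) s"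
        by (simp add: G)
    qed
  next
    assume a: "gain_opt P0 P1 r0 r1 lam (- \<sigma>)"
    show "gain_opt P1 P0 r1 r0 (- lam) \<sigma>"
      unfolding gain_opt_def
    proof (intro allI)
      fix \<pi>' s
      have "gain (polP P0 P1 (- \<pi>')) (polr r0 r1 lam (- \<pi>')) s \<le> gain (polP P0 P1 (- \<sigma>)) (polr r0 r1 lam (- \<sigma>)) s"
        using a unfolding gain_opt_def by blast
      thus "gain (polP P1 P0 \<pi>') (polr r1 r0 (- lam) \<pi>') s \<le> gain (polP P1 P0 \<sigma>) (polr r1 r0 (- lam) \<sigma>) s"
        by (simp add: G)
    qed
  qed
  show ?thesis
  proof
    assume a: "bias_opt P1 P0 r1 r0 (- lam) \<pi>"
    show "bias_opt P0 P1 r0 r1 lam (- \<pi>)"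
      unfolding bias_opt_def
    proof (intro conjI allI impI)
      show "gain_opt P0 P1 r0 r1 lam (- \<pi>)" using a GO by (simp add: bias_opt_def)
      fix \<pi>' s assume "gain_opt P0 P1 r0 r1 lam \<pi>'"
      hence "gain_opt P1 P0 r1 r0 (- lam) (- \<pi>')" using GO[of "- \<pi>'"] by simp
      hence "bias (polP P1 P0 (- \<pi>')) (polr r1 r0 (- lam) (- \<pi>')) s \<le> bias (polP P1 P0 \<pi>) (polr r1 r0 (- lam) \<pi>) s"
        using a unfolding bias_opt_def by blast
      thus "bias (polP P0 P1 \<pi>') (polr r0 r1 lam \<pi>') s \<le> bias (polP P0 P1 (- \<pi>)) (polr r0 r1 lam (- \<pi>)) s"
        by (simp add: B)
    qed
  next
    assume a: "bias_opt P0 P1 r0 r1 lam (- \<pi>)"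
    show "bias_opt P1 P0 r1 r0 (- lam) \<pi>"
      unfolding bias_opt_def
    proof (intro conjI allI impI)
      show "gain_opt P1 P0 r1 r0 (- lam) \<pi>" using a GO by (simp add: bias_opt_def)
      fix \<pi>' s assume "gain_opt P1 P0 r1 r0 (- lam) \<pi>'"
      hence "gain_opt P0 P1 r0 r1 lam (- \<pi>')" using GO[of "\<pi>'"] by simp
      hence "bias (polP P0 P1 (- \<pi>')) (polr r0 r1 lam (- \<pi>')) s \<le> bias (polP P0 P1 (- \<pi>)) (polr r0 r1 lam (- \<pi>)) s"
        using a unfolding bias_opt_def by blast
      thus "bias (polP P1 P0 \<pi>') (polr r1 r0 (- lam) \<pi>') s \<le> bias (polP P1 P0 \<pi>) (polr r1 r0 (- lam) \<pi>) s"
        by (simp add: B)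
    qed
  qed
qed

lemma vnorm_swap: "vnorm (\<lambda>s. r0 s - r1 s) = vnorm (\<lambda>s. r1 s - r0 s)"
  by (simp add: vnorm_def abs_minus_commute)

lemma mnorm_swap: "mnorm (\<lambda>s s'. P0 s s' - P1 s s') = mnorm (\<lambda>s s'. P1 s s' - P0 s s')"
  by (simp add: mnorm_def abs_minus_commute)

theorem mainTheorem3:
  fixes P0 P1 :: "'s::finite \<Rightarrow> 's \<Rightarrow> real" and r0 r1 :: "'s \<Rightarrow> real"
  assumes "stochastic P0" and "stochastic P1"
    and "unichain (polP P0 P1 UNIV)" and "unichain (polP P0 P1 {})"
  shows "(\<forall>lam. lam \<le> - vnorm (\<lambda>s. r1 s - r0 s)
              - span r1 * diameter P1 * mnorm (\<lambda>s s'. P1 s s' - P0 s s') / 2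
            \<longrightarrow> bias_opt P0 P1 r0 r1 lam UNIV) \<and>
         (\<forall>lam. lam \<ge> vnorm (\<lambda>s. r1 s - r0 s)
              + span r0 * diameter P0 * mnorm (\<lambda>s s'. P1 s s' - P0 s s') / 2
            \<longrightarrow> bias_opt P0 P1 r0 r1 lam {})"
proof (intro conjI allI impI)
  fix lam :: real
  assume a: "lam \<le> - vnorm (\<lambda>s. r1 s - r0 s) - span r1 * diameter P1 * mnorm (\<lambda>s s'. P1 s s' - P0 s s') / 2"
  have u1: "unichain P1" using assms(3) by (simp add: polP_UNIV)
  show "bias_opt P0 P1 r0 r1 lam UNIV" by (rule part1[OF assms(1,2) u1 a])
next
  fix lam :: real
  assume a: "lam \<ge> vnorm (\<lambda>s. r1 s - r0 s) + span r0 * diameter P0 * mnorm (\<lambda>s s'. P1 s s' - P0 s s') / 2"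
  have "polP P0 P1 {} = P0" by (auto simp: polP_def fun_eq_iff)
  hence u0: "unichain P0" using assms(4) by simp
  have "- lam \<le> - vnorm (\<lambda>s. r0 s - r1 s) - span r0 * diameter P0 * mnorm (\<lambda>s s'. P0 s s' - P1 s s') / 2"
    unfolding vnorm_swap[of r0 r1] mnorm_swap[of P0 P1] using a by linarith
  hence "bias_opt P1 P0 r1 r0 (- lam) UNIV" by (rule part1[OF assms(2,1) u0])
  thus "bias_opt P0 P1 r0 r1 lam {}" using swap_opt[OF assms(1,2), of r1 r0 lam UNIV] by simp
qed



end
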